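(* Let $n\ge2$. Then $$S_{NC}^\delta(n,-n)=\bigcup_{\pi\in NC(n)}\ \bigcup_{V\in\pi} S_{NC}^\delta(n,-n)_{\pi,V},$$ and this union is disjoint.
   Context: $[\pm n]=\{\pm1,\dots,\pm n\}$; permutations of $\{1,\dots,n\}$ are regarded as permutations of $[\pm n]$ fixing $-1,\dots,-n$. $\delta$ is the permutation $\delta(k)=-k$, $\gamma_n=(1,2,\dots,n)$, so $\gamma_n\delta\gamma_n^{-1}\delta=(1,\dots,n)(-n,\dots,-1)$. For a permutation $\sigma$, $\#(\sigma)$ is its number of cycles (including fixed points). $S_{NC}^\delta(n,-n)$ is the set of permutations $\sigma$ of $[\pm n]$ such that: the subgroup generated by $\sigma$ and $\gamma_n\delta\gamma_n^{-1}\delta$ acts transitively on $[\pm n]$; $\#(\sigma)+\#(\sigma^{-1}\gamma_n\delta\gamma_n^{-1}\delta)=2n$; and $\sigma\delta$ is a pairing (an involution without fixed points). A cycle of $\sigma$ is a through cycle if it meets both $\{1,\dots,n\}$ and $\{-1,\dots,-n\}$. $NC(n)$ is the set of non-crossing partitions of $\{1,\dots,n\}$; each $\pi\in NC(n)$ is regarded as the permutation whose cycles are its blocks, each in increasing order. For $\pi\in NC(n)$ and a block $V\in\pi$, $S_{NC}^\delta(n,-n)_{\pi,V}$ is the set of $\sigma\in S_{NC}^\delta(n,-n)$ such that every cycle of $\sigma$ is either a cycle of $\pi\delta\pi^{-1}\delta$ or contained in $V\cup\delta(V)$, and every cycle of $\sigma$ contained in $V\cup\delta(V)$ is a through cycle.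 *)

theory Defs
  imports "HOL-Combinatorics.Permutations"
begin

definition PM :: "nat \<Rightarrow> int set" where
  "PM n = {k. 1 \<le> \<bar>k\<bar> \<and> \<bar>k\<bar> \<le> int n}"

definition delta :: "int \<Rightarrow> int" where
  "delta k = - k"

definition gamma :: "nat \<Rightarrow> int \<Rightarrow> int" where
  "gamma n k = (if 1 \<le> k \<and> k < int n then k + 1 else if k = int n then 1 else k)"

text \<open>Permutations are composed as functions (right to left).\<close>
definition gdg :: "nat \<Rightarrow> int \<Rightarrow> int" where
  "gdg n = gamma n \<circ> delta \<circ> inv (gamma n) \<circ> delta"

definition cyc :: "(int \<Rightarrow> int) \<Rightarrow> int \<Rightarrow> int set" where
  "cyc f x = {(f ^^ k) x | k. True}"

definition ncyc :: "nat \<Rightarrow> (int \<Rightarrow> int) \<Rightarrow> nat" where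
  "ncyc n f = card (cyc f ` PM n)"

text \<open>The group generated by f and g acts transitively on A
  (orbit under words in f, g and their inverses).\<close>
definition transitive_on :: "int set \<Rightarrow> (int \<Rightarrow> int) \<Rightarrow> (int \<Rightarrow> int) \<Rightarrow> bool" where
  "transitive_on A f g \<longleftrightarrow>
     (\<forall>x\<in>A. \<forall>y\<in>A. (x, y) \<in> ({(z, f z) | z. True} \<union> {(z, inv f z) | z. True}
                            \<union> {(z, g z) | z. True} \<union> {(z, inv g z) | z. True})\<^sup>*)"

definition is_pairing :: "int set \<Rightarrow> (int \<Rightarrow> int) \<Rightarrow> bool" where
  "is_pairing A p \<longleftrightarrow> (\<forall>x\<in>A. p (p x) = x \<and> p x \<noteq> x)"

definition SNC :: "nat \<Rightarrow> (int \<Rightarrow> int) set" where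
  "SNC n = {\<sigma>. \<sigma> permutes PM n
              \<and> transitive_on (PM n) \<sigma> (gdg n)
              \<and> ncyc n \<sigma> + ncyc n (inv \<sigma> \<circ> gdg n) = 2 * n
              \<and> is_pairing (PM n) (\<sigma> \<circ> delta)}"

definition through :: "int set \<Rightarrow> bool" where
  "through C \<longleftrightarrow> (\<exists>x\<in>C. x > 0) \<and> (\<exists>x\<in>C. x < 0)"

definition is_partition :: "nat \<Rightarrow> int set set \<Rightarrow> bool" where
  "is_partition n P \<longleftrightarrow> \<Union>P = {1..int n} \<and> {} \<notin> P
     \<and> (\<forall>V\<in>P. \<forall>W\<in>P. V \<noteq> W \<longrightarrow> V \<inter> W = {})"

definition NC :: "nat \<Rightarrow> int set set set" where
  "NC n = {P. is_partition n P \<and>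
     \<not> (\<exists>V\<in>P. \<exists>W\<in>P. V \<noteq> W \<and> (\<exists>a b c d. a < b \<and> b < c \<and> c < d
            \<and> a \<in> V \<and> c \<in> V \<and> b \<in> W \<and> d \<in> W))}"

text \<open>The permutation whose cycles are the blocks of P, each in increasing order
  (all integers outside the union of the blocks are fixed).\<close>
definition perm_of_partition :: "int set set \<Rightarrow> int \<Rightarrow> int" where
  "perm_of_partition P x =
     (if \<exists>V\<in>P. x \<in> V then
        (let V = (THE V. V \<in> P \<and> x \<in> V) in
          if \<exists>y\<in>V. y > x then Min {y\<in>V. y > x} else Min V)
      else x)"

definition SNC_piV :: "nat \<Rightarrow> int set set \<Rightarrow> int set \<Rightarrow> (int \<Rightarrow> int) set" where
  "SNC_piV n P V = {\<sigma>\<in>SNC n.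
     (let \<rho> = perm_of_partition P \<circ> delta \<circ> inv (perm_of_partition P) \<circ> delta;
          U = V \<union> delta ` V in
      \<forall>x\<in>PM n. (cyc \<sigma> x \<in> cyc \<rho> ` PM n \<or> cyc \<sigma> x \<subseteq> U)
               \<and> (cyc \<sigma> x \<subseteq> U \<longrightarrow> through (cyc \<sigma> x)))}"

end

theory Submission
  imports Defs "HOL-Combinatorics.Cycles"
begin

lemma cyc_self[simp]: "x \<in> cyc f x"
  unfolding cyc_def by (auto intro!: exI[of _ 0])

lemma cyc_pow: "(f ^^ k) x \<in> cyc f x"
  unfolding cyc_def by auto

lemma cyc_f[simp]: "f x \<in> cyc f x"
  using cyc_pow[where f=f and k=1 and x=x] by simp

lemma cyc_closed_sub:
  assumes "\<And>w. w \<in> A \<Longrightarrow> f w \<in> A" "x \<in> A"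
  shows "cyc f x \<subseteq> A"
proof
  fix y assume "y \<in> cyc f x"
  then obtain k where y: "y = (f ^^ k) x" unfolding cyc_def by auto
  have "(f ^^ k) x \<in> A" for k by (induction k) (auto intro: assms)
  thus "y \<in> A" using y by simp
qed

lemma cyc_step: "y \<in> cyc f x \<Longrightarrow> f y \<in> cyc f x"
  unfolding cyc_def
proof clarsimp
  fix k show "\<exists>j. f ((f ^^ k) x) = (f ^^ j) x" by (rule exI[of _ "Suc k"]) simp
qed

lemma cyc_trans: "y \<in> cyc f x \<Longrightarrow> cyc f y \<subseteq> cyc f x"
  by (rule cyc_closed_sub) (auto intro: cyc_step)

lemma perm_nilpotent:
  assumes "f permutes X" "finite X"
  obtains m where "m > 0" "f ^^ m = id"
  using permutation_is_nilpotent[of f] permutes_imp_permutation[OF assms(2,1)] by metis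

lemma cyc_sym:
  assumes "f permutes X" "finite X" "y \<in> cyc f x"
  shows "x \<in> cyc f y"
proof -
  obtain k where y: "y = (f ^^ k) x" using assms(3) unfolding cyc_def by auto
  obtain m where m: "m > 0" "f ^^ m = id" using perm_nilpotent[OF assms(1,2)] by metis
  have fmk: "f ^^ (m * k) = id" using m(2) by (metis funpow_mult id_funpow)
  have "k \<le> m * k" using m(1) by simp
  then have "(f ^^ (m * k - k)) y = (f ^^ (m * k)) x"
    using y by (metis funpow_add le_add_diff_inverse2 o_apply)
  also have "\<dots> = x" using fmk by simp
  finally show ?thesis using cyc_pow by metis
qed

lemma cyc_eq:
  assumes "f permutes X" "finite X" "y \<in> cyc f x"
  shows "cyc f y = cyc f x"
  using cyc_trans[OF assms(3)] cyc_trans[OF cyc_sym[OF assms]] by blast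

lemma cyc_eq_iff:
  assumes "f permutes X" "finite X"
  shows "cyc f y = cyc f x \<longleftrightarrow> y \<in> cyc f x"
  using cyc_eq[OF assms] cyc_self by metis

lemma inv_is_pow:
  assumes "f permutes X" "finite X"
  obtains k where "inv f = f ^^ k"
proof -
  obtain m where m: "m > 0" "f ^^ m = id" using perm_nilpotent[OF assms] by metis
  from m obtain m' where mm: "m = Suc m'" by (cases m) auto
  have 1: "f \<circ> f ^^ m' = id" using m(2) mm by simp
  have 2: "f ^^ m' \<circ> f = id" using m(2) mm by (simp only: funpow_Suc_right)
  have "inv f = f ^^ m'" using inv_unique_comp[OF 1 2] .
  thus ?thesis using that by blast
qed

lemma cyc_pow_closed: "y \<in> cyc f x \<Longrightarrow> (f ^^ k) y \<in> cyc f x"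
  by (induction k) (auto intro: cyc_step)

lemma cyc_inv_sub:
  assumes "f permutes X" "finite X"
  shows "cyc (inv f) x \<subseteq> cyc f x"
proof -
  obtain k where k: "inv f = f ^^ k" using inv_is_pow[OF assms] by metis
  show ?thesis unfolding k by (rule cyc_closed_sub) (auto intro: cyc_pow_closed)
qed

lemma cyc_inv:
  assumes "f permutes X" "finite X"
  shows "cyc (inv f) x = cyc f x"
proof -
  have "inv f permutes X" using assms(1) by (rule permutes_inv)
  from cyc_inv_sub[OF this assms(2)] have "cyc f x \<subseteq> cyc (inv f) x"
    using permutes_inv_inv[OF assms(1)] by simp
  thus ?thesis using cyc_inv_sub[OF assms] by blast
qed

lemma cyc_subset:
  assumes "f permutes X" "x \<in> X"
  shows "cyc f x \<subseteq> X"
  by (rule cyc_closed_sub) (use assms in \<open>auto simp: permutes_in_image\<close>)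

lemma cyc_fixed: "f x = x \<Longrightarrow> cyc f x = {x}"
proof -
  assume "f x = x"
  then have "(f ^^ k) x = x" for k by (induction k) auto
  thus ?thesis unfolding cyc_def by auto
qed

lemma cyc_outside: "f permutes X \<Longrightarrow> x \<notin> X \<Longrightarrow> cyc f x = {x}"
  by (rule cyc_fixed) (simp add: permutes_not_in)

lemma cyc_agree:
  assumes "\<And>w. w \<in> cyc f x \<Longrightarrow> g w = f w"
  shows "cyc g x = cyc f x"
proof -
  have "(g ^^ k) x = (f ^^ k) x" for k
  proof (induction k)
    case (Suc k)
    then show ?case using assms[OF cyc_pow[where f=f and k=k and x=x]] by simp
  qed simp
  thus ?thesis unfolding cyc_def by simp
qed

lemma cyc_moved:
  assumes "f permutes X" "finite X" "f x \<noteq> x" "y \<in> cyc f x"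
  shows "f y \<noteq> y"
proof
  assume "f y = y"
  then have "cyc f y = {y}" by (rule cyc_fixed)
  then have "x = y" using cyc_eq[OF assms(1,2,4)] cyc_self[of x f] by auto
  thus False using assms(3) \<open>f y = y\<close> by simp
qed

lemma cyc_finite:
  assumes "f permutes X" "finite X"
  shows "finite (cyc f x)"
  by (cases "x \<in> X") (auto intro: finite_subset[OF cyc_subset[OF assms(1)]] assms(2) simp: cyc_outside[OF assms(1)])


lemma merge_cyc_x:
  assumes f: "f permutes X" and fin: "finite X" and xy: "x \<in> X" "y \<in> X" "y \<notin> cyc f x"
  defines "g \<equiv> f \<circ> transpose x y"
  shows "cyc g x = cyc f x \<union> cyc f y"
proof
  have xny: "x \<noteq> y" using xy by auto
  have xnfy: "x \<notin> cyc f y" using cyc_sym[OF f fin] xy(3) by blast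
  have gx: "g x = f y" and gy: "g y = f x" unfolding g_def by auto
  have go: "w \<noteq> x \<Longrightarrow> w \<noteq> y \<Longrightarrow> g w = f w" for w unfolding g_def by auto
  show "cyc g x \<subseteq> cyc f x \<union> cyc f y"
  proof (rule cyc_closed_sub)
    fix w assume w: "w \<in> cyc f x \<union> cyc f y"
    show "g w \<in> cyc f x \<union> cyc f y"
    proof (cases "w = x \<or> w = y")
      case True thus ?thesis using gx gy by auto
    next
      case False thus ?thesis using go[of w] w cyc_step by fastforce
    qed
  qed simp
  let ?O = "cyc g x"
  have "cyc f y \<subseteq> ?O \<inter> cyc f y"
  proof -
    have "cyc f (f y) \<subseteq> ?O \<inter> cyc f y"
    proof (rule cyc_closed_sub)
      fix w assume w: "w \<in> ?O \<inter> cyc f y"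
      show "f w \<in> ?O \<inter> cyc f y"
      proof (cases "w = y")
        case True
        then show ?thesis using gx cyc_f[of g x] by auto
      next
        case False
        then have "w \<noteq> x" using w xnfy by auto
        then show ?thesis using go[of w] False w cyc_step by fastforce
      qed
    next
      show "f y \<in> ?O \<inter> cyc f y" using gx cyc_f[of g x] by auto
    qed
    moreover have "cyc f (f y) = cyc f y" using cyc_eq[OF f fin cyc_f] .
    ultimately show ?thesis by simp
  qed
  then have yO: "cyc f y \<subseteq> ?O" by blast
  have "cyc f x \<subseteq> ?O \<inter> cyc f x"
  proof (rule cyc_closed_sub)
    fix w assume w: "w \<in> ?O \<inter> cyc f x"
    show "f w \<in> ?O \<inter> cyc f x"
    proof (cases "w = x")
      case True
      have "y \<in> ?O" using yO by auto
      then have "g y \<in> ?O" by (rule cyc_step)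
      then show ?thesis using gy True by auto
    next
      case False
      then have "w \<noteq> y" using w xy(3) by auto
      then show ?thesis using go[of w] False w cyc_step by fastforce
    qed
  qed simp
  then show "cyc f x \<union> cyc f y \<subseteq> ?O" using yO by blast
qed

lemma merge_cyc_other:
  assumes f: "f permutes X" and fin: "finite X" and xy: "y \<notin> cyc f x"
    and w: "w \<notin> cyc f x \<union> cyc f y"
  shows "cyc (f \<circ> transpose x y) w = cyc f w"
proof (rule cyc_agree)
  fix v assume v: "v \<in> cyc f w"
  have "v \<noteq> x"
  proof
    assume "v = x"
    then have "cyc f w = cyc f x" using cyc_eq[OF f fin v] by simp
    then show False using w by auto
  qed
  moreover have "v \<noteq> y"
  proof
    assume "v = y"
    then have "cyc f w = cyc f y" using cyc_eq[OF f fin v] by simp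
    then show False using w by auto
  qed
  ultimately show "(f \<circ> transpose x y) v = f v" by simp
qed

lemma merge_card:
  assumes f: "f permutes X" and fin: "finite X" and xy: "x \<in> X" "y \<in> X" "y \<notin> cyc f x"
  shows "card (cyc (f \<circ> transpose x y) ` X) + 1 = card (cyc f ` X)"
proof -
  define g where "g = f \<circ> transpose x y"
  define M where "M = cyc f x \<union> cyc f y"
  have gx: "cyc g x = M" unfolding g_def M_def by (rule merge_cyc_x[OF assms])
  have gp: "g permutes X" unfolding g_def using f xy by (simp add: permutes_compose permutes_swap_id)
  have "cyc g ` X = insert M (cyc f ` (X - M))"
  proof
    show "cyc g ` X \<subseteq> insert M (cyc f ` (X - M))"
    proof
      fix C assume "C \<in> cyc g ` X"
      then obtain w where w: "w \<in> X" "C = cyc g w" by auto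
      show "C \<in> insert M (cyc f ` (X - M))"
      proof (cases "w \<in> M")
        case True
        then have "cyc g w = M" using cyc_eq[OF gp fin] gx by metis
        then show ?thesis using w by simp
      next
        case False
        then have "cyc g w = cyc f w" unfolding g_def
          by (intro merge_cyc_other[OF f fin xy(3)]) (simp add: M_def)
        then show ?thesis using w False by auto
      qed
    qed
  next
    show "insert M (cyc f ` (X - M)) \<subseteq> cyc g ` X"
    proof
      fix C assume C: "C \<in> insert M (cyc f ` (X - M))"
      show "C \<in> cyc g ` X"
      proof (cases "C = M")
        case True then show ?thesis using gx xy by (metis image_eqI)
      next
        case False
        then obtain w where w: "w \<in> X" "w \<notin> M" "C = cyc f w" using C by auto
        then have "cyc g w = cyc f w" unfolding g_def
          by (intro merge_cyc_other[OF f fin xy(3)]) (simp add: M_def)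
        then show ?thesis using w by auto
      qed
    qed
  qed
  moreover have "M \<notin> cyc f ` (X - M)"
  proof
    assume "M \<in> cyc f ` (X - M)"
    then obtain w where "w \<notin> M" "M = cyc f w" by auto
    then show False using cyc_self[of w f] by auto
  qed
  ultimately have c1: "card (cyc g ` X) = card (cyc f ` (X - M)) + 1"
    using fin by simp
  have "cyc f ` X = insert (cyc f x) (insert (cyc f y) (cyc f ` (X - M)))"
  proof
    show "cyc f ` X \<subseteq> insert (cyc f x) (insert (cyc f y) (cyc f ` (X - M)))"
    proof
      fix C assume "C \<in> cyc f ` X"
      then obtain w where w: "w \<in> X" "C = cyc f w" by auto
      show "C \<in> insert (cyc f x) (insert (cyc f y) (cyc f ` (X - M)))"
      proof (cases "w \<in> M")
        case True
        then have "cyc f w = cyc f x \<or> cyc f w = cyc f y"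
          unfolding M_def using cyc_eq[OF f fin] by blast
        then show ?thesis using w by auto
      next
        case False then show ?thesis using w by auto
      qed
    qed
  qed (use xy in auto)
  moreover have "cyc f x \<notin> cyc f ` (X - M)"
  proof
    assume "cyc f x \<in> cyc f ` (X - M)"
    then obtain w where "w \<notin> M" "cyc f x = cyc f w" by auto
    then show False using cyc_self[of w f] M_def by auto
  qed
  moreover have "cyc f y \<notin> cyc f ` (X - M)"
  proof
    assume "cyc f y \<in> cyc f ` (X - M)"
    then obtain w where "w \<notin> M" "cyc f y = cyc f w" by auto
    then show False using cyc_self[of w f] M_def by auto
  qed
  moreover have "cyc f x \<noteq> cyc f y" using xy(3) cyc_self[of y f] by auto
  ultimately have "card (cyc f ` X) = card (cyc f ` (X - M)) + 2"
    using fin by simp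
  with c1 show ?thesis unfolding g_def by simp
qed

lemma split_sep:
  assumes f: "f permutes X" and fin: "finite X" and xy: "x \<noteq> y" "y \<in> cyc f x"
  shows "y \<notin> cyc (f \<circ> transpose x y) x"
proof -
  define g where "g = f \<circ> transpose x y"
  have "x \<in> cyc f y" using cyc_sym[OF f fin xy(2)] .
  then have ex: "\<exists>t. (f ^^ t) y = x" unfolding cyc_def by auto
  define t where "t = (LEAST t. (f ^^ t) y = x)"
  have ft: "(f ^^ t) y = x" unfolding t_def using LeastI_ex[OF ex] .
  have tmin: "\<And>s. (f ^^ s) y = x \<Longrightarrow> t \<le> s" unfolding t_def by (rule Least_le)
  have t0: "t > 0" using ft xy(1) by (cases t) auto
  define A where "A = {(f ^^ j) y | j. 1 \<le> j \<and> j \<le> t}"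
  have ynA: "(f ^^ j) y \<noteq> y" if "1 \<le> j" "j \<le> t" for j
  proof
    assume fj: "(f ^^ j) y = y"
    show False
    proof (cases "j = t")
      case True then show False using fj ft xy(1) by simp
    next
      case False
      have "(f ^^ (t - j)) ((f ^^ j) y) = (f ^^ t) y"
        using that by (metis funpow_add le_add_diff_inverse2 o_apply)
      then have "(f ^^ (t - j)) y = x" using fj ft by simp
      then have "t \<le> t - j" by (rule tmin)
      then show False using that False by simp
    qed
  qed
  have "cyc g x \<subseteq> A"
  proof (rule cyc_closed_sub)
    show "x \<in> A" unfolding A_def using ft t0 by force
  next
    fix w assume "w \<in> A"
    then obtain j where j: "w = (f ^^ j) y" "1 \<le> j" "j \<le> t" unfolding A_def by auto
    show "g w \<in> A"
    proof (cases "j = t")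
      case True
      then have "g w = (f ^^ 1) y" using j ft unfolding g_def by simp
      then show ?thesis unfolding A_def using t0 by force
    next
      case False
      have wx: "w \<noteq> x"
      proof
        assume "w = x" then have "t \<le> j" using j tmin by simp
        then show False using False j by simp
      qed
      have wy: "w \<noteq> y" using ynA j by simp
      have "g w = (f ^^ (Suc j)) y" using wx wy j unfolding g_def by simp
      then show ?thesis unfolding A_def using j False by force
    qed
  qed
  moreover have "y \<notin> A" unfolding A_def using ynA by force
  ultimately show ?thesis unfolding g_def by blast
qed

lemma ncyc_swap:
  assumes f: "f permutes X" and fin: "finite X" and xy: "x \<in> X" "y \<in> X" "x \<noteq> y"
  shows "int (card (cyc (f \<circ> transpose x y) ` X)) =
         int (card (cyc f ` X)) + (if y \<in> cyc f x then 1 else -1)"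
proof (cases "y \<in> cyc f x")
  case True
  define g where "g = f \<circ> transpose x y"
  have gp: "g permutes X" unfolding g_def using f xy by (simp add: permutes_compose permutes_swap_id)
  have "y \<notin> cyc g x" unfolding g_def by (rule split_sep[OF f fin xy(3) True])
  from merge_card[OF gp fin xy(1,2) this] have "card (cyc (g \<circ> transpose x y) ` X) + 1 = card (cyc g ` X)" .
  moreover have "g \<circ> transpose x y = f" unfolding g_def by (simp add: comp_assoc)
  ultimately show ?thesis using True unfolding g_def by simp
next
  case False
  from merge_card[OF f fin xy(1,2) False] show ?thesis using False by simp
qed

lemma cyc_inv_fun:
  assumes "f permutes X" "finite X"
  shows "cyc (inv f) = cyc f"
  using cyc_inv[OF assms] by auto

lemma ncyc_swap_left:
  assumes h: "h permutes X" and fin: "finite X" and xy: "x \<in> X" "y \<in> X" "x \<noteq> y"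
  shows "int (card (cyc (transpose x y \<circ> h) ` X)) =
         int (card (cyc h ` X)) + (if y \<in> cyc h x then 1 else -1)"
proof -
  have ih: "inv h permutes X" using permutes_inv[OF h] .
  have k: "inv h \<circ> transpose x y permutes X" using ih xy by (simp add: permutes_compose permutes_swap_id)
  have "transpose x y \<circ> h = inv (inv h \<circ> transpose x y)"
    using h by (simp add: o_inv_distrib permutes_bij bij_imp_bij_inv permutes_inv_inv)
  then have "cyc (transpose x y \<circ> h) = cyc (inv h \<circ> transpose x y)"
    using cyc_inv_fun[OF k fin] by simp
  moreover have "cyc (inv h) = cyc h" using cyc_inv_fun[OF h fin] .
  ultimately show ?thesis using ncyc_swap[OF ih fin xy] by simp
qed


definition Dn :: "int set \<Rightarrow> (int \<Rightarrow> int) \<Rightarrow> (int \<Rightarrow> int) \<Rightarrow> nat" where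
  "Dn X G f = card (cyc f ` X) + card (cyc (inv f \<circ> G) ` X)"

lemma inv_comp_swap:
  assumes "f permutes X"
  shows "inv (f \<circ> transpose x y) = transpose x y \<circ> inv f"
  using assms by (simp add: o_inv_distrib permutes_bij)

lemma dstep:
  assumes f: "f permutes X" and G: "G permutes X" and fin: "finite X"
    and xy: "x \<in> X" "y \<in> X" "x \<noteq> y" "y \<notin> cyc f x"
  shows "int (Dn X G (f \<circ> transpose x y)) =
     int (Dn X G f) - 1 + (if y \<in> cyc (inv f \<circ> G) x then 1 else -1)"
proof -
  have h: "inv f \<circ> G permutes X" using f G by (simp add: permutes_compose permutes_inv)
  have "inv (f \<circ> transpose x y) \<circ> G = transpose x y \<circ> (inv f \<circ> G)"
    using inv_comp_swap[OF f] by (simp add: comp_assoc)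
  moreover have "int (card (cyc (f \<circ> transpose x y) ` X)) = int (card (cyc f ` X)) - 1"
    using ncyc_swap[OF f fin xy(1-3)] xy(4) by simp
  ultimately show ?thesis using ncyc_swap_left[OF h fin xy(1-3)] unfolding Dn_def by simp
qed

lemma dstep_le:
  assumes f: "f permutes X" and G: "G permutes X" and fin: "finite X"
    and xy: "x \<in> X" "y \<in> X" "x \<noteq> y" "y \<notin> cyc f x"
  shows "Dn X G (f \<circ> transpose x y) \<le> Dn X G f"
  using dstep[OF assms] by (simp split: if_splits)

lemma dstep_lt:
  assumes f: "f permutes X" and G: "G permutes X" and fin: "finite X"
    and xy: "x \<in> X" "y \<in> X" "x \<noteq> y" "y \<notin> cyc f x" "y \<notin> cyc (inv f \<circ> G) x"
  shows "Dn X G (f \<circ> transpose x y) + 2 = Dn X G f"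
  using dstep[OF assms(1-7)] xy(5) by simp

lemma delete_pt:
  assumes f: "f permutes X" and G: "G permutes X" and fin: "finite X"
    and z: "z \<in> X" "f z \<noteq> z"
  defines "f' \<equiv> f \<circ> transpose (inv f z) z"
  shows "f' permutes X" "{w. f' w \<noteq> w} \<subseteq> {w. f w \<noteq> w} - {z}"
    "Dn X G f \<le> Dn X G f'"
    "\<And>a b. a \<noteq> z \<Longrightarrow> b \<noteq> z \<Longrightarrow> b \<in> cyc f' a \<longleftrightarrow> b \<in> cyc f a"
proof -
  define u where "u = inv f z"
  have fu: "f u = z" unfolding u_def using f by (meson permutes_inverses(1))
  have uX: "u \<in> X" unfolding u_def using f z(1) by (simp add: permutes_in_image permutes_inv)
  have uz: "u \<noteq> z" using fu z(2) by auto
  show fp: "f' permutes X" unfolding f'_def u_def[symmetric] using f uX z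
    by (simp add: permutes_compose permutes_swap_id)
  have f'z: "f' z = z" unfolding f'_def u_def[symmetric] using fu by simp
  have f'u: "f' u = f z" unfolding f'_def u_def[symmetric] by simp
  have f'o: "w \<noteq> u \<Longrightarrow> w \<noteq> z \<Longrightarrow> f' w = f w" for w unfolding f'_def u_def[symmetric] by simp
  show "{w. f' w \<noteq> w} \<subseteq> {w. f w \<noteq> w} - {z}"
  proof
    fix w assume "w \<in> {w. f' w \<noteq> w}"
    then have w: "f' w \<noteq> w" by simp
    have wz: "w \<noteq> z" using w f'z by auto
    show "w \<in> {w. f w \<noteq> w} - {z}"
    proof (cases "w = u")
      case True then show ?thesis using fu uz wz by simp
    next
      case False then show ?thesis using f'o[OF False wz] w wz by simp
    qed
  qed
  have ff: "f = f' \<circ> transpose z u"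
    unfolding f'_def u_def[symmetric] by (simp add: comp_assoc transpose_commute)
  have nc: "u \<notin> cyc f' z" using cyc_fixed[where f="f'" and x=z, OF f'z] uz by simp
  show "Dn X G f \<le> Dn X G f'" using dstep_le[OF fp G fin z(1) uX uz[symmetric] nc] ff by simp
  have cz: "cyc f z = cyc f' z \<union> cyc f' u"
    using merge_cyc_x[OF fp fin z(1) uX nc] ff by simp
  have co: "w \<notin> cyc f' z \<union> cyc f' u \<Longrightarrow> cyc f w = cyc f' w" for w
    using merge_cyc_other[OF fp fin nc, of w] ff by simp
  fix a b assume ab: "a \<noteq> z" "b \<noteq> z"
  show "b \<in> cyc f' a \<longleftrightarrow> b \<in> cyc f a"
  proof (cases "a \<in> cyc f' u")
    case True
    have "a \<in> cyc f z" using cz True by auto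
    then have "cyc f a = cyc f z" using cyc_eq[OF f fin] by blast
    moreover have "cyc f' a = cyc f' u" using cyc_eq[OF fp fin True] .
    ultimately show ?thesis using cz cyc_fixed[where f="f'" and x=z, OF f'z] ab by auto
  next
    case False
    then have "a \<notin> cyc f' z \<union> cyc f' u" using cyc_fixed[where f="f'" and x=z, OF f'z] ab by auto
    then show ?thesis using co by simp
  qed
qed

lemma reduce:
  assumes G: "G permutes X" and fin: "finite X"
  shows "f permutes X \<Longrightarrow> \<exists>g. g permutes X \<and> {w. g w \<noteq> w} \<subseteq> S
     \<and> (\<forall>a\<in>S. \<forall>b\<in>S. b \<in> cyc g a \<longleftrightarrow> b \<in> cyc f a) \<and> Dn X G f \<le> Dn X G g"
proof (induction "card ({w. f w \<noteq> w} - S)" arbitrary: f rule: less_induct)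
  case less
  show ?case
  proof (cases "{w. f w \<noteq> w} \<subseteq> S")
    case True
    then show ?thesis using less.prems by blast
  next
    case False
    then obtain z where z: "f z \<noteq> z" "z \<notin> S" by auto
    have zX: "z \<in> X" using z(1) less.prems by (meson permutes_not_in)
    define f' where "f' = f \<circ> transpose (inv f z) z"
    note D = delete_pt[OF less.prems G fin zX z(1), folded f'_def]
    have finm: "finite ({w. f w \<noteq> w} - S)"
      using less.prems fin by (metis (mono_tags, lifting) finite_Diff finite_subset mem_Collect_eq permutes_not_in subsetI)
    have "{w. f' w \<noteq> w} - S \<subset> {w. f w \<noteq> w} - S" using D(2) z by blast
    then have "card ({w. f' w \<noteq> w} - S) < card ({w. f w \<noteq> w} - S)"
      by (rule psubset_card_mono[OF finm])
    from less.hyps[OF this D(1)] obtain g where g: "g permutes X" "{w. g w \<noteq> w} \<subseteq> S"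
      "\<forall>a\<in>S. \<forall>b\<in>S. b \<in> cyc g a \<longleftrightarrow> b \<in> cyc f' a" "Dn X G f' \<le> Dn X G g" by blast
    have "\<forall>a\<in>S. \<forall>b\<in>S. b \<in> cyc g a \<longleftrightarrow> b \<in> cyc f a" using g(3) D(4) z(2) by metis
    then show ?thesis using g D(3) by (meson le_trans)
  qed
qed


definition ginv :: "nat \<Rightarrow> int \<Rightarrow> int" where
  "ginv n k = (if 2 \<le> k \<and> k \<le> int n then k - 1 else if k = 1 then int n else k)"

lemma gamma_ginv: "n \<ge> 1 \<Longrightarrow> gamma n (ginv n k) = k"
  unfolding gamma_def ginv_def by auto

lemma ginv_gamma: "n \<ge> 1 \<Longrightarrow> ginv n (gamma n k) = k"
  unfolding gamma_def ginv_def by auto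

lemma inv_gamma: "n \<ge> 1 \<Longrightarrow> inv (gamma n) = ginv n"
  by (rule inv_equality) (simp_all add: gamma_ginv ginv_gamma)

lemma bij_gamma: "n \<ge> 1 \<Longrightarrow> bij (gamma n)"
  by (rule o_bij[of "ginv n"]) (auto simp: gamma_ginv ginv_gamma)

lemma gdg_eq: "n \<ge> 1 \<Longrightarrow> gdg n k = (if k > 0 then gamma n k else - ginv n (- k))"
  unfolding gdg_def by (simp add: inv_gamma delta_def) (auto simp: gamma_def ginv_def)

lemma gdg_pos: "n \<ge> 1 \<Longrightarrow> 0 < k \<Longrightarrow> k \<le> int n \<Longrightarrow> gdg n k = (if k < int n then k + 1 else 1)"
  unfolding gdg_eq gamma_def by auto

lemma gdg_sign: "n \<ge> 1 \<Longrightarrow> 0 < gdg n k \<longleftrightarrow> 0 < k"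
  unfolding gdg_eq gamma_def ginv_def by auto

lemma PM_eq: "PM n = {- int n..-1} \<union> {1..int n}"
  unfolding PM_def by auto

lemma finite_PM[simp]: "finite (PM n)"
  unfolding PM_eq by simp

lemma card_PM: "card (PM n) = 2 * n"
proof -
  have "card ({- int n..-1} \<union> {1..int n}) = card {- int n..-1} + card {1..int n}"
    by (rule card_Un_disjoint) auto
  thus ?thesis unfolding PM_eq by simp
qed

lemma gdg_permutes: "n \<ge> 1 \<Longrightarrow> gdg n permutes PM n"
proof (rule bij_imp_permutes)
  assume n: "n \<ge> 1"
  have b: "bij (gdg n)" unfolding gdg_def
    by (intro bij_comp bij_gamma[OF n] bij_imp_bij_inv) (auto simp: delta_def bij_def inj_def surj_def intro: exI[of _ "- _"])
  have s: "gdg n ` PM n \<subseteq> PM n"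
    unfolding gdg_eq[OF n] gamma_def ginv_def PM_def by auto
  have i: "inj_on (gdg n) (PM n)" using b by (meson bij_is_inj inj_on_subset subset_UNIV)
  have "gdg n ` PM n = PM n"
    by (rule endo_inj_surj[OF finite_PM s i])
  then show "bij_betw (gdg n) (PM n) (PM n)" using i
    by (simp add: bij_betw_def)
next
  fix x assume n: "n \<ge> 1" and "x \<notin> PM n"
  then show "gdg n x = x" unfolding gdg_eq[OF n] gamma_def ginv_def PM_def by auto
qed

lemma gdg_iter_pos: "n \<ge> 1 \<Longrightarrow> k < n \<Longrightarrow> (gdg n ^^ k) 1 = int k + 1"
proof (induction k)
  case (Suc k)
  then show ?case by (simp add: gdg_pos)
qed simp

lemma gdg_iter_neg: "n \<ge> 1 \<Longrightarrow> k < n \<Longrightarrow> (gdg n ^^ k) (- int n) = - (int n - int k)"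
proof (induction k)
  case (Suc k)
  then show ?case by (simp add: gdg_eq ginv_def)
qed simp

lemma cyc_gdg_pos:
  assumes n: "n \<ge> 1" and "1 \<le> x" "x \<le> int n"
  shows "cyc (gdg n) x = {1..int n}"
proof -
  have sub: "cyc (gdg n) w \<subseteq> {1..int n}" if "w \<in> {1..int n}" for w
    by (rule cyc_closed_sub) (use that n in \<open>auto simp: gdg_pos\<close>)
  have all: "{1..int n} \<subseteq> cyc (gdg n) 1"
  proof
    fix j assume j: "j \<in> {1..int n}"
    then have "(gdg n ^^ nat (j - 1)) 1 = j" using gdg_iter_pos[OF n, of "nat (j - 1)"] by auto
    then show "j \<in> cyc (gdg n) 1" using cyc_pow by metis
  qed
  have "x \<in> cyc (gdg n) 1" using all assms by auto
  then have "cyc (gdg n) x = cyc (gdg n) 1" using cyc_eq[OF gdg_permutes[OF n] finite_PM] by blast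
  then show ?thesis using all sub[of 1] assms by auto
qed

lemma cyc_gdg_neg:
  assumes n: "n \<ge> 1" and "- int n \<le> x" "x \<le> -1"
  shows "cyc (gdg n) x = {- int n..-1}"
proof -
  have sub: "cyc (gdg n) w \<subseteq> {- int n..-1}" if "w \<in> {- int n..-1}" for w
    by (rule cyc_closed_sub) (use that n in \<open>auto simp: gdg_eq ginv_def\<close>)
  have all: "{- int n..-1} \<subseteq> cyc (gdg n) (- int n)"
  proof
    fix j assume j: "j \<in> {- int n..-1}"
    then have "(gdg n ^^ nat (j + int n)) (- int n) = j" using gdg_iter_neg[OF n, of "nat (j + int n)"] by auto
    then show "j \<in> cyc (gdg n) (- int n)" using cyc_pow by metis
  qed
  have "x \<in> cyc (gdg n) (- int n)" using all assms by auto
  then have "cyc (gdg n) x = cyc (gdg n) (- int n)" using cyc_eq[OF gdg_permutes[OF n] finite_PM] by blast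
  then show ?thesis using all sub[of "- int n"] assms by auto
qed

lemma ncyc_gdg:
  assumes "n \<ge> 1"
  shows "card (cyc (gdg n) ` PM n) = 2"
proof -
  have "cyc (gdg n) ` PM n = {{1..int n}, {- int n..-1}}"
  proof
    show "cyc (gdg n) ` PM n \<subseteq> {{1..int n}, {- int n..-1}}"
      unfolding PM_eq using cyc_gdg_pos[OF assms] cyc_gdg_neg[OF assms] by auto
    have "1 \<in> PM n" "- int n \<in> PM n" using assms unfolding PM_def by auto
    then show "{{1..int n}, {- int n..-1}} \<subseteq> cyc (gdg n) ` PM n"
    proof -
      assume a: "1 \<in> PM n" "- int n \<in> PM n"
      have "cyc (gdg n) 1 = {1..int n}" using cyc_gdg_pos[OF assms, of 1] assms by simp
      moreover have "cyc (gdg n) (- int n) = {- int n..-1}" using cyc_gdg_neg[OF assms, of "- int n"] assms by simp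
      ultimately show ?thesis using a by (metis empty_subsetI image_eqI insert_subset)
    qed
  qed
  moreover have "{1..int n} \<noteq> {- int n..-1}"
  proof
    assume "{1..int n} = {- int n..-1}"
    moreover have "1 \<in> {1..int n}" using assms by simp
    ultimately show False by auto
  qed
  ultimately show ?thesis by simp
qed

lemma Dn_id:
  assumes "n \<ge> 1"
  shows "Dn (PM n) (gdg n) id = 2 * n + 2"
proof -
  have "cyc id ` PM n = (\<lambda>x. {x}) ` PM n" using cyc_fixed[of id] by simp
  then have "card (cyc id ` PM n) = 2 * n"
    using card_PM[of n] by (simp add: card_image)
  then show ?thesis unfolding Dn_def using ncyc_gdg[OF assms] by simp
qed


lemma step_le':
  assumes n: "n \<ge> 1" and f: "f permutes PM n" and xy: "x \<in> PM n" "y \<in> PM n" "x \<noteq> y" "f x = x"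
  shows "Dn (PM n) (gdg n) (f \<circ> transpose x y) \<le> Dn (PM n) (gdg n) f"
  by (rule dstep_le[OF f gdg_permutes[OF n] finite_PM xy(1-3)]) (use cyc_fixed[of f x] xy in auto)

lemma step_lt':
  assumes n: "n \<ge> 1" and f: "f permutes PM n" and xy: "x \<in> PM n" "y \<in> PM n" "x \<noteq> y" "f x = x"
    and A: "\<And>w. w \<in> A \<Longrightarrow> inv f (gdg n w) \<in> A" "x \<in> A" "y \<notin> A"
  shows "Dn (PM n) (gdg n) (f \<circ> transpose x y) + 2 = Dn (PM n) (gdg n) f"
proof (rule dstep_lt[OF f gdg_permutes[OF n] finite_PM xy(1-3)])
  show "y \<notin> cyc f x" using cyc_fixed[of f x] xy by auto
  have "cyc (inv f \<circ> gdg n) x \<subseteq> A" by (rule cyc_closed_sub) (use A in auto)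
  then show "y \<notin> cyc (inv f \<circ> gdg n) x" using A by auto
qed

lemma next_in:
  assumes g: "g permutes X" "finite X" and S: "{w. g w \<noteq> w} \<subseteq> S" and t: "t \<in> cyc g s" "t \<noteq> s"
  shows "g s \<in> S" "g s \<in> cyc g s" "g s \<noteq> s"
proof -
  show gs: "g s \<noteq> s" using t cyc_fixed[of g s] by auto
  show "g s \<in> cyc g s" by simp
  have "g (g s) \<noteq> g s" by (rule cyc_moved[OF g gs]) simp
  then show "g s \<in> S" using S by auto
qed

lemma PM_pos: "0 < x \<Longrightarrow> x \<le> int n \<Longrightarrow> x \<in> PM n"
  unfolding PM_def by auto
lemma PM_neg: "x < 0 \<Longrightarrow> - int n \<le> x \<Longrightarrow> x \<in> PM n"
  unfolding PM_def by auto

lemma inv_id_swap: "inv (id \<circ> transpose x y) = transpose x y"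
  by simp

lemma inv_swap2: "inv (id \<circ> transpose a b \<circ> transpose c d) = transpose c d \<circ> transpose a b"
  by (simp add: o_inv_distrib)

lemma swap_perm: "x \<in> PM n \<Longrightarrow> y \<in> PM n \<Longrightarrow> f permutes PM n \<Longrightarrow> f \<circ> transpose x y permutes PM n"
  by (simp add: permutes_compose permutes_swap_id)

text \<open>Case (i): two crossing non-through cycles, plus a through cycle.\<close>

lemma chain_i:
  assumes n: "n \<ge> 1" and ord: "0 < a" "a < b" "b < c" "c \<le> int n" "0 < d" "d \<le> int n" "d < a \<or> c < d"
    and pq: "0 < p" "p \<le> int n" "q < 0" "- int n \<le> q" "p \<noteq> a" "p \<noteq> b" "p \<noteq> c" "p \<noteq> d"
  shows "Dn (PM n) (gdg n) (id \<circ> transpose a c \<circ> transpose b d \<circ> transpose p q) + 2 \<le> 2 * n"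
proof -
  let ?D = "Dn (PM n) (gdg n)"
  have X: "a \<in> PM n" "b \<in> PM n" "c \<in> PM n" "d \<in> PM n" "p \<in> PM n" "q \<in> PM n"
    using ord pq by (auto intro: PM_pos PM_neg)
  define f1 where "f1 = id \<circ> transpose a c"
  define f2 where "f2 = f1 \<circ> transpose b d"
  define f3 where "f3 = f2 \<circ> transpose p q"
  have p1: "f1 permutes PM n" unfolding f1_def using X by (intro swap_perm) auto
  have p2: "f2 permutes PM n" unfolding f2_def using X p1 by (intro swap_perm) auto
  have "?D f1 \<le> ?D id" unfolding f1_def using ord by (intro step_le'[OF n]) (use X in auto)
  moreover have "?D f2 + 2 = ?D f1" unfolding f2_def
  proof (rule step_lt'[OF n p1 X(2) X(4), where A="{a..c-1}"])
    fix w assume "w \<in> {a..c-1}"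
    then show "inv f1 (gdg n w) \<in> {a..c-1}" unfolding f1_def using ord n
      by (auto simp: gdg_pos transpose_def)
  qed (use ord in \<open>auto simp: f1_def\<close>)
  moreover have "?D f3 + 2 = ?D f2" unfolding f3_def
  proof (rule step_lt'[OF n p2 X(5) X(6), where A="{w. 0 < w}"])
    fix w :: int assume "w \<in> {w. 0 < w}"
    then show "inv f2 (gdg n w) \<in> {w. 0 < w}" unfolding f2_def f1_def using ord n
      by (simp only: inv_swap2) (auto simp: gdg_sign transpose_def)
  qed (use ord pq in \<open>auto simp: f1_def f2_def\<close>)
  ultimately show ?thesis using Dn_id[OF n] unfolding f3_def f2_def f1_def by simp
qed


lemma chain_ii:
  assumes n: "n \<ge> 1" and ord: "0 < a" "a < b" "b < c" "c \<le> int n" "0 < d" "d \<le> int n" "d < a \<or> c < d"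
    and q: "q < 0" "- int n \<le> q" and e: "e = b \<or> e = q" and q2: "q2 < 0" "- int n \<le> q2"
    and e2: "e2 = b \<or> e2 = q \<or> e2 = q2"
  shows "Dn (PM n) (gdg n) (id \<circ> transpose a c \<circ> transpose b q \<circ> transpose d e2) + 2 + 2 \<le> 2 * n + 2"
proof -
  let ?D = "Dn (PM n) (gdg n)"
  have X: "a \<in> PM n" "b \<in> PM n" "c \<in> PM n" "d \<in> PM n" "q \<in> PM n" "e2 \<in> PM n"
    using ord q q2 e2 by (auto intro: PM_pos PM_neg)
  define f1 where "f1 = id \<circ> transpose a c"
  define f2 where "f2 = f1 \<circ> transpose b q"
  define f3 where "f3 = f2 \<circ> transpose d e2"
  have p1: "f1 permutes PM n" unfolding f1_def using X by (intro swap_perm) auto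
  have p2: "f2 permutes PM n" unfolding f2_def using X p1 by (intro swap_perm) auto
  have "?D f1 \<le> ?D id" unfolding f1_def using ord by (intro step_le'[OF n]) (use X in auto)
  moreover have "?D f2 + 2 = ?D f1" unfolding f2_def
  proof (rule step_lt'[OF n p1 X(2) X(5), where A="{w. 0 < w}"])
    fix w :: int assume "w \<in> {w. 0 < w}"
    then show "inv f1 (gdg n w) \<in> {w. 0 < w}" unfolding f1_def using ord n
      by (auto simp: gdg_sign transpose_def)
  qed (use ord q in \<open>auto simp: f1_def\<close>)
  moreover have "?D f3 + 2 = ?D f2" unfolding f3_def
  proof (rule step_lt'[OF n p2 X(4) X(6), where A="{w. 0 < w \<and> w \<le> int n \<and> (c \<le> w \<or> w < a)}"])
    fix w :: int assume "w \<in> {w. 0 < w \<and> w \<le> int n \<and> (c \<le> w \<or> w < a)}"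
    then show "inv f2 (gdg n w) \<in> {w. 0 < w \<and> w \<le> int n \<and> (c \<le> w \<or> w < a)}"
      unfolding f2_def f1_def using ord n q
      by (simp only: inv_swap2) (auto simp: gdg_pos transpose_def)
  qed (use ord q q2 e2 in \<open>auto simp: f1_def f2_def\<close>)
  ultimately show ?thesis using Dn_id[OF n] unfolding f3_def f2_def f1_def by simp
qed


lemma next_rel:
  assumes g: "g permutes X" "finite X" and \<sigma>: "\<sigma> permutes X" and S: "{w. g w \<noteq> w} \<subseteq> S"
    and R: "\<And>s t. s \<in> S \<Longrightarrow> t \<in> S \<Longrightarrow> (cyc g t = cyc g s \<longleftrightarrow> cyc \<sigma> t = cyc \<sigma> s)"
    and st: "s \<in> S" "t \<in> S" "t \<noteq> s" "cyc \<sigma> t = cyc \<sigma> s"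
  shows "g s \<in> S \<and> g s \<noteq> s \<and> cyc \<sigma> (g s) = cyc \<sigma> s"
proof -
  have "t \<in> cyc g s" using R[OF st(1,2)] st(4) cyc_eq_iff[OF g] by blast
  note N = next_in[OF g S this st(3)]
  have "cyc g (g s) = cyc g s" using cyc_eq_iff[OF g] N(2) by blast
  then show ?thesis using R[OF st(1) N(1)] N by blast
qed

lemma reduce_rel:
  assumes n: "n \<ge> 1" and \<sigma>: "\<sigma> permutes PM n"
  obtains g where "g permutes PM n" "{w. g w \<noteq> w} \<subseteq> S"
    "\<And>s t. s \<in> S \<Longrightarrow> t \<in> S \<Longrightarrow> (cyc g t = cyc g s \<longleftrightarrow> cyc \<sigma> t = cyc \<sigma> s)"
    "Dn (PM n) (gdg n) \<sigma> \<le> Dn (PM n) (gdg n) g"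
proof -
  obtain g where g: "g permutes PM n" "{w. g w \<noteq> w} \<subseteq> S"
     "\<forall>a\<in>S. \<forall>b\<in>S. b \<in> cyc g a \<longleftrightarrow> b \<in> cyc \<sigma> a" "Dn (PM n) (gdg n) \<sigma> \<le> Dn (PM n) (gdg n) g"
    using reduce[OF gdg_permutes[OF n] finite_PM \<sigma>, of S] by blast
  have "cyc g t = cyc g s \<longleftrightarrow> cyc \<sigma> t = cyc \<sigma> s" if "s \<in> S" "t \<in> S" for s t
  proof -
    have "cyc g t = cyc g s \<longleftrightarrow> t \<in> cyc g s" by (rule cyc_eq_iff[OF g(1) finite_PM])
    also have "\<dots> \<longleftrightarrow> t \<in> cyc \<sigma> s" using g(3) that by blast
    also have "\<dots> \<longleftrightarrow> cyc \<sigma> t = cyc \<sigma> s" by (rule cyc_eq_iff[OF \<sigma> finite_PM, symmetric])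
    finally show ?thesis .
  qed
  then show ?thesis using that g by blast
qed

lemma cross_i:
  assumes n: "n \<ge> 1" and \<sigma>: "\<sigma> permutes PM n" and D: "Dn (PM n) (gdg n) \<sigma> = 2 * n"
    and ord: "0 < a" "a < b" "b < c" "c \<le> int n" "0 < d" "d \<le> int n" "d < a \<or> c < d"
    and pq: "0 < p" "p \<le> int n" "q < 0" "- int n \<le> q"
    and rel: "cyc \<sigma> c = cyc \<sigma> a" "cyc \<sigma> d = cyc \<sigma> b" "cyc \<sigma> q = cyc \<sigma> p"
      "cyc \<sigma> b \<noteq> cyc \<sigma> a" "cyc \<sigma> p \<noteq> cyc \<sigma> a" "cyc \<sigma> p \<noteq> cyc \<sigma> b"
  shows False
proof -
  define S where "S = {a, b, c, d, p, q}"
  obtain g where g: "g permutes PM n" "{w. g w \<noteq> w} \<subseteq> S"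
    "\<And>s t. s \<in> S \<Longrightarrow> t \<in> S \<Longrightarrow> (cyc g t = cyc g s \<longleftrightarrow> cyc \<sigma> t = cyc \<sigma> s)"
    "Dn (PM n) (gdg n) \<sigma> \<le> Dn (PM n) (gdg n) g"
    using reduce_rel[OF n \<sigma>] by blast
  note NR = next_rel[OF g(1) finite_PM \<sigma> g(2) g(3)]
  have dist: "p \<noteq> a" "p \<noteq> b" "p \<noteq> c" "p \<noteq> d" using rel by auto
  have neq: "a \<noteq> b" "a \<noteq> c" "a \<noteq> d" "a \<noteq> p" "a \<noteq> q" "b \<noteq> c" "b \<noteq> d" "b \<noteq> p" "b \<noteq> q"
        "c \<noteq> d" "c \<noteq> p" "c \<noteq> q" "d \<noteq> p" "d \<noteq> q" "p \<noteq> q"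
    using ord pq dist by auto
  have ga: "g a = c" using NR[of a c] rel neq unfolding S_def by auto
  have gc: "g c = a" using NR[of c a] rel neq unfolding S_def by auto
  have gb: "g b = d" using NR[of b d] rel neq unfolding S_def by auto
  have gd: "g d = b" using NR[of d b] rel neq unfolding S_def by auto
  have gp: "g p = q" using NR[of p q] rel neq unfolding S_def by auto
  have gq: "g q = p" using NR[of q p] rel neq unfolding S_def by auto
  have "g = id \<circ> transpose a c \<circ> transpose b d \<circ> transpose p q"
  proof
    fix w
    show "g w = (id \<circ> transpose a c \<circ> transpose b d \<circ> transpose p q) w"
    proof (cases "w \<in> S")
      case True
      from True show ?thesis unfolding S_def
        by (elim insertE emptyE) (simp_all add: ga gb gc gd gp gq neq neq[symmetric])
    next
      case False
      then have "g w = w" using g(2) by auto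
      then show ?thesis using False unfolding S_def by (simp add: transpose_def)
    qed
  qed
  then have "Dn (PM n) (gdg n) g + 2 \<le> 2 * n" using chain_i[OF n ord pq dist] by simp
  then show False using g(4) D by simp
qed


lemma fun_eq_on_S:
  assumes "{w. g w \<noteq> w} \<subseteq> S" "\<And>w. w \<in> S \<Longrightarrow> g w = h w" "\<And>w. w \<notin> S \<Longrightarrow> h w = w"
  shows "g = h"
proof
  fix w show "g w = h w" using assms by (cases "w \<in> S") auto
qed

lemma cross_ii:
  assumes n: "n \<ge> 1" and \<sigma>: "\<sigma> permutes PM n" and D: "Dn (PM n) (gdg n) \<sigma> = 2 * n"
    and ord: "0 < a" "a < b" "b < c" "c \<le> int n" "0 < d" "d \<le> int n" "d < a \<or> c < d"
    and q: "q1 < 0" "- int n \<le> q1" "q2 < 0" "- int n \<le> q2"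
    and rel: "cyc \<sigma> c = cyc \<sigma> a" "cyc \<sigma> q1 = cyc \<sigma> b" "cyc \<sigma> q2 = cyc \<sigma> d"
      "cyc \<sigma> b \<noteq> cyc \<sigma> a" "cyc \<sigma> d \<noteq> cyc \<sigma> a"
  shows False
proof (cases "cyc \<sigma> d = cyc \<sigma> b")
  case True
  define S where "S = {a, b, c, d, q1}"
  obtain g where g: "g permutes PM n" "{w. g w \<noteq> w} \<subseteq> S"
    "\<And>s t. s \<in> S \<Longrightarrow> t \<in> S \<Longrightarrow> (cyc g t = cyc g s \<longleftrightarrow> cyc \<sigma> t = cyc \<sigma> s)"
    "Dn (PM n) (gdg n) \<sigma> \<le> Dn (PM n) (gdg n) g"
    using reduce_rel[OF n \<sigma>] by blast
  note NR = next_rel[OF g(1) finite_PM \<sigma> g(2) g(3)]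
  have neq: "a \<noteq> b" "a \<noteq> c" "a \<noteq> d" "a \<noteq> q1" "b \<noteq> c" "b \<noteq> d" "b \<noteq> q1"
        "c \<noteq> d" "c \<noteq> q1" "d \<noteq> q1"
    using ord q by auto
  have inj: "inj g" using g(1) by (rule permutes_inj)
  have ga: "g a = c" using NR[of a c] rel neq unfolding S_def by auto
  have gc: "g c = a" using NR[of c a] rel neq unfolding S_def by auto
  have gb: "g b = d \<or> g b = q1" using NR[of b d] rel neq True unfolding S_def by auto
  have gd: "g d = b \<or> g d = q1" using NR[of d b] rel neq True unfolding S_def by auto
  have gq: "g q1 = b \<or> g q1 = d" using NR[of q1 b] rel neq True unfolding S_def by auto
  have inS: "\<And>x y. x \<in> S \<Longrightarrow> y \<in> S \<Longrightarrow> cyc \<sigma> y = cyc \<sigma> x \<Longrightarrow> y \<in> cyc g x"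
    using g(3) cyc_eq_iff[OF g(1) finite_PM] by blast
  have closed2: "\<And>x y. g x = y \<Longrightarrow> g y = x \<Longrightarrow> cyc g x \<subseteq> {x, y}"
    by (rule cyc_closed_sub) auto
  show False
  proof (cases "g b = d")
    case gbd: True
    have "g d \<noteq> b"
    proof
      assume "g d = b"
      then have "cyc g b \<subseteq> {b, d}" using closed2 gbd by blast
      moreover have "q1 \<in> cyc g b" using inS[of b q1] rel unfolding S_def by simp
      ultimately show False using neq by auto
    qed
    then have gdq: "g d = q1" using gd by simp
    have gqb: "g q1 = b" using gq gbd inj neq by (metis injD)
    have "g = id \<circ> transpose a c \<circ> transpose b q1 \<circ> transpose d b"
    proof (rule fun_eq_on_S[OF g(2)])
      fix w assume "w \<in> S"
      then show "g w = (id \<circ> transpose a c \<circ> transpose b q1 \<circ> transpose d b) w"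
        unfolding S_def by (elim insertE emptyE) (simp_all add: ga gc gbd gdq gqb neq neq[symmetric])
    qed (auto simp: S_def transpose_def)
    then have "Dn (PM n) (gdg n) g + 2 + 2 \<le> 2 * n + 2"
      using chain_ii[OF n ord q(1,2) _ q(1,2), of b b] by simp
    then show False using g(4) D by simp
  next
    case gbq: False
    then have gbq: "g b = q1" using gb by simp
    have "g q1 \<noteq> b"
    proof
      assume "g q1 = b"
      then have "cyc g b \<subseteq> {b, q1}" using closed2 gbq by blast
      moreover have "d \<in> cyc g b" using inS[of b d] True unfolding S_def by simp
      ultimately show False using neq by auto
    qed
    then have gqd: "g q1 = d" using gq by simp
    have gdb: "g d = b" using gd gbq inj neq by (metis injD)
    have "g = id \<circ> transpose a c \<circ> transpose b q1 \<circ> transpose d q1"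
    proof (rule fun_eq_on_S[OF g(2)])
      fix w assume "w \<in> S"
      then show "g w = (id \<circ> transpose a c \<circ> transpose b q1 \<circ> transpose d q1) w"
        unfolding S_def by (elim insertE emptyE) (simp_all add: ga gc gbq gdb gqd neq neq[symmetric])
    qed (auto simp: S_def transpose_def)
    then have "Dn (PM n) (gdg n) g + 2 + 2 \<le> 2 * n + 2"
      using chain_ii[OF n ord q(1,2) _ q(1,2), of b q1] by simp
    then show False using g(4) D by simp
  qed
next
  case False
  define S where "S = {a, b, c, d, q1, q2}"
  obtain g where g: "g permutes PM n" "{w. g w \<noteq> w} \<subseteq> S"
    "\<And>s t. s \<in> S \<Longrightarrow> t \<in> S \<Longrightarrow> (cyc g t = cyc g s \<longleftrightarrow> cyc \<sigma> t = cyc \<sigma> s)"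
    "Dn (PM n) (gdg n) \<sigma> \<le> Dn (PM n) (gdg n) g"
    using reduce_rel[OF n \<sigma>] by blast
  note NR = next_rel[OF g(1) finite_PM \<sigma> g(2) g(3)]
  have q12: "q1 \<noteq> q2" using rel False by auto
  have neq: "a \<noteq> b" "a \<noteq> c" "a \<noteq> d" "a \<noteq> q1" "b \<noteq> c" "b \<noteq> d" "b \<noteq> q1"
        "c \<noteq> d" "c \<noteq> q1" "d \<noteq> q1" "a \<noteq> q2" "b \<noteq> q2" "c \<noteq> q2" "d \<noteq> q2" "q1 \<noteq> q2"
    using ord q q12 by auto
  have ga: "g a = c" using NR[of a c] rel neq False unfolding S_def by auto
  have gc: "g c = a" using NR[of c a] rel neq False unfolding S_def by auto
  have gb: "g b = q1" using NR[of b q1] rel neq False unfolding S_def by auto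
  have gq1: "g q1 = b" using NR[of q1 b] rel neq False unfolding S_def by auto
  have gd: "g d = q2" using NR[of d q2] rel neq False unfolding S_def by auto
  have gq2: "g q2 = d" using NR[of q2 d] rel neq False unfolding S_def by auto
  have "g = id \<circ> transpose a c \<circ> transpose b q1 \<circ> transpose d q2"
  proof (rule fun_eq_on_S[OF g(2)])
    fix w assume "w \<in> S"
    then show "g w = (id \<circ> transpose a c \<circ> transpose b q1 \<circ> transpose d q2) w"
      unfolding S_def by (elim insertE emptyE) (simp_all add: ga gc gb gd gq1 gq2 neq neq[symmetric])
  qed (auto simp: S_def transpose_def)
  then have "Dn (PM n) (gdg n) g + 2 + 2 \<le> 2 * n + 2"
    using chain_ii[OF n ord q(1,2) _ q(3,4), of b q2] by simp
  then show False using g(4) D by simp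
qed


definition V0 :: "nat \<Rightarrow> (int \<Rightarrow> int) \<Rightarrow> int set" where
  "V0 n \<sigma> = {x \<in> PM n. 0 < x \<and> through (cyc \<sigma> x)}"

definition P0 :: "nat \<Rightarrow> (int \<Rightarrow> int) \<Rightarrow> int set set" where
  "P0 n \<sigma> = insert (V0 n \<sigma>) {cyc \<sigma> x | x. x \<in> PM n \<and> 0 < x \<and> \<not> through (cyc \<sigma> x)}"

lemma SNC_perm: "\<sigma> \<in> SNC n \<Longrightarrow> \<sigma> permutes PM n"
  unfolding SNC_def by auto

lemma SNC_Dn: "\<sigma> \<in> SNC n \<Longrightarrow> Dn (PM n) (gdg n) \<sigma> = 2 * n"
  unfolding SNC_def Dn_def ncyc_def by auto

lemma SNC_inv:
  assumes "\<sigma> \<in> SNC n" "x \<in> PM n"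
  shows "inv \<sigma> x = - \<sigma> (- x)"
proof -
  have p: "\<sigma> (- \<sigma> (- x)) = x" using assms unfolding SNC_def is_pairing_def delta_def by auto
  have "inv \<sigma> (\<sigma> (- \<sigma> (- x))) = - \<sigma> (- x)"
    using SNC_perm[OF assms(1)] by (meson permutes_inverses(2))
  then show ?thesis using p by simp
qed

lemma PM_uminus[simp]: "- x \<in> PM n \<longleftrightarrow> x \<in> PM n"
  unfolding PM_def by auto

lemma SNC_cyc_neg:
  assumes s: "\<sigma> \<in> SNC n" and x: "x \<in> PM n"
  shows "cyc \<sigma> (- x) = uminus ` cyc \<sigma> x"
proof -
  have sp: "\<sigma> permutes PM n" using SNC_perm[OF s] .
  have "(inv \<sigma> ^^ k) (- x) = - ((\<sigma> ^^ k) x)" for k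
  proof (induction k)
    case (Suc k)
    have "(\<sigma> ^^ k) x \<in> PM n" using x permutes_funpow[OF sp] by (simp add: permutes_in_image)
    then show ?case using Suc SNC_inv[OF s, of "- (\<sigma> ^^ k) x"] by simp
  qed simp
  then have "cyc (inv \<sigma>) (- x) = uminus ` cyc \<sigma> x" unfolding cyc_def by auto
  then show ?thesis using cyc_inv[OF sp finite_PM] by simp
qed

lemma through_neg[simp]: "through (uminus ` C) \<longleftrightarrow> through C"
  unfolding through_def by force

lemma nonthrough_pos:
  assumes "\<sigma> permutes PM n" "x \<in> PM n" "0 < x" "\<not> through (cyc \<sigma> x)" "y \<in> cyc \<sigma> x"
  shows "0 < y"
proof -
  have "y \<in> PM n" using cyc_subset[OF assms(1,2)] assms(5) by auto
  then have "y \<noteq> 0" unfolding PM_def by auto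
  then show ?thesis using assms(3,4,5) cyc_self[of x \<sigma>] unfolding through_def by force
qed

lemma nonthrough_neg:
  assumes "\<sigma> permutes PM n" "x \<in> PM n" "x < 0" "\<not> through (cyc \<sigma> x)" "y \<in> cyc \<sigma> x"
  shows "y < 0"
proof -
  have "y \<in> PM n" using cyc_subset[OF assms(1,2)] assms(5) by auto
  then have "y \<noteq> 0" unfolding PM_def by auto
  then show ?thesis using assms(3,4,5) cyc_self[of x \<sigma>] unfolding through_def by force
qed

lemma exists_through:
  assumes s: "\<sigma> \<in> SNC n" and n: "n \<ge> 1"
  shows "\<exists>x\<in>PM n. through (cyc \<sigma> x)"
proof (rule ccontr)
  assume nt: "\<not> ?thesis"
  have sp: "\<sigma> permutes PM n" using SNC_perm[OF s] .
  have G: "gdg n permutes PM n" using gdg_permutes[OF n] .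
  let ?R = "{(z, \<sigma> z) | z. True} \<union> {(z, inv \<sigma> z) | z. True} \<union> {(z, gdg n z) | z. True} \<union> {(z, inv (gdg n) z) | z. True}"
  have 1: "1 \<in> PM n" "- 1 \<in> PM n" using n unfolding PM_def by auto
  have "(1, - 1) \<in> ?R\<^sup>*" using s 1 unfolding SNC_def transitive_on_def by blast
  moreover have "(1, z) \<in> ?R\<^sup>* \<Longrightarrow> 0 < z" for z :: int
  proof (induction rule: rtrancl_induct)
    case (step y z)
    show ?case
    proof (cases "y \<in> PM n")
      case yX: True
      have a: "\<sigma> y \<in> cyc \<sigma> y" by simp
      have b: "inv \<sigma> y \<in> cyc \<sigma> y" using cyc_f[of "inv \<sigma>" y] cyc_inv[OF sp finite_PM] by simp
      have c: "0 < gdg n y" using step gdg_sign[OF n] by simp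
      have d: "0 < inv (gdg n) y"
        using gdg_sign[OF n, of "inv (gdg n) y"] step(3) permutes_inverses(1)[OF G] by simp
      show ?thesis using step(2) nonthrough_pos[OF sp yX step(3)] nt yX a b c d by auto
    next
      case False
      then have "\<sigma> y = y" "inv \<sigma> y = y" "inv (gdg n) y = y"
        using sp G permutes_inv permutes_not_in by metis+
      then show ?thesis using step gdg_sign[OF n] by auto
    qed
  qed simp
  ultimately show False by fastforce
qed


lemma V0_nonempty:
  assumes s: "\<sigma> \<in> SNC n" and n: "n \<ge> 1"
  shows "V0 n \<sigma> \<noteq> {}"
proof -
  obtain x where x: "x \<in> PM n" "through (cyc \<sigma> x)" using exists_through[OF s n] by blast
  have "x \<noteq> 0" using x unfolding PM_def by auto
  show ?thesis
  proof (cases "0 < x")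
    case True then show ?thesis using x unfolding V0_def by auto
  next
    case False
    then have "0 < - x" using \<open>x \<noteq> 0\<close> by simp
    moreover have "through (cyc \<sigma> (- x))" using SNC_cyc_neg[OF s x(1)] x(2) by simp
    moreover have "- x \<in> PM n" using x(1) by simp
    ultimately have "- x \<in> V0 n \<sigma>" unfolding V0_def by blast
    then show ?thesis by blast
  qed
qed

lemma cyc_in_PM: "\<sigma> permutes PM n \<Longrightarrow> x \<in> PM n \<Longrightarrow> y \<in> cyc \<sigma> x \<Longrightarrow> y \<in> PM n"
  using cyc_subset by blast

lemma P0_partition:
  assumes s: "\<sigma> \<in> SNC n" and n: "n \<ge> 1"
  shows "is_partition n (P0 n \<sigma>)"
proof -
  have sp: "\<sigma> permutes PM n" using SNC_perm[OF s] .
  have U: "\<Union>(P0 n \<sigma>) = {1..int n}"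
  proof
    show "\<Union>(P0 n \<sigma>) \<subseteq> {1..int n}"
    proof
      fix y assume "y \<in> \<Union>(P0 n \<sigma>)"
      then consider "y \<in> V0 n \<sigma>" | x where "x \<in> PM n" "0 < x" "\<not> through (cyc \<sigma> x)" "y \<in> cyc \<sigma> x"
        unfolding P0_def by auto
      then show "y \<in> {1..int n}"
      proof cases
        case 1 then show ?thesis unfolding V0_def PM_def by auto
      next
        case 2
        have "0 < y" using nonthrough_pos[OF sp 2] .
        moreover have "y \<in> PM n" using cyc_in_PM[OF sp 2(1,4)] .
        ultimately show ?thesis unfolding PM_def by auto
      qed
    qed
  next
    show "{1..int n} \<subseteq> \<Union>(P0 n \<sigma>)"
    proof
      fix y assume y: "y \<in> {1..int n}"
      then have yp: "y \<in> PM n" unfolding PM_def by auto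
      show "y \<in> \<Union>(P0 n \<sigma>)"
      proof (cases "through (cyc \<sigma> y)")
        case True then show ?thesis using y yp unfolding P0_def V0_def by auto
      next
        case False
        then have "cyc \<sigma> y \<in> P0 n \<sigma>" using y yp unfolding P0_def by auto
        then show ?thesis using cyc_self[of y \<sigma>] by blast
      qed
    qed
  qed
  have E: "{} \<notin> P0 n \<sigma>" using V0_nonempty[OF s n] cyc_self unfolding P0_def by blast
  have D: "V \<inter> W = {}" if VW: "V \<in> P0 n \<sigma>" "W \<in> P0 n \<sigma>" "V \<noteq> W" for V W
  proof (rule ccontr)
    assume "V \<inter> W \<noteq> {}"
    then obtain z where z: "z \<in> V" "z \<in> W" by auto
    have key: "\<And>x. x \<in> PM n \<Longrightarrow> \<not> through (cyc \<sigma> x) \<Longrightarrow> z \<in> cyc \<sigma> x \<Longrightarrow> z \<notin> V0 n \<sigma>"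
      using cyc_eq[OF sp finite_PM] unfolding V0_def by auto
    show False
    proof (cases "V = V0 n \<sigma>")
      case True
      then obtain y where "W = cyc \<sigma> y" "y \<in> PM n" "\<not> through (cyc \<sigma> y)" using VW unfolding P0_def by auto
      then show False using key z True by auto
    next
      case VF: False
      then obtain x where x: "V = cyc \<sigma> x" "x \<in> PM n" "\<not> through (cyc \<sigma> x)" using VW unfolding P0_def by auto
      show False
      proof (cases "W = V0 n \<sigma>")
        case True then show False using key z x by auto
      next
        case False
        then obtain y where y: "W = cyc \<sigma> y" using VW unfolding P0_def by auto
        have "cyc \<sigma> z = cyc \<sigma> x" using cyc_eq[OF sp finite_PM] z(1) x(1) by blast
        moreover have "cyc \<sigma> z = cyc \<sigma> y" using cyc_eq[OF sp finite_PM] z(2) y by blast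
        ultimately
        show False using x y VW by simp
      qed
    qed
  qed
  show ?thesis unfolding is_partition_def using U E D by blast
qed

lemma through_neg_elem:
  assumes "\<sigma> permutes PM n" "x \<in> PM n" "through (cyc \<sigma> x)"
  obtains q where "q < 0" "- int n \<le> q" "cyc \<sigma> q = cyc \<sigma> x"
proof -
  obtain q where q: "q \<in> cyc \<sigma> x" "q < 0" using assms(3) unfolding through_def by auto
  have "q \<in> PM n" using cyc_in_PM[OF assms(1,2) q(1)] .
  then show ?thesis using that q cyc_eq[OF assms(1) finite_PM q(1)] unfolding PM_def by auto
qed

lemma through_pos_elem:
  assumes "\<sigma> permutes PM n" "x \<in> PM n" "through (cyc \<sigma> x)"
  obtains p where "0 < p" "p \<le> int n" "cyc \<sigma> p = cyc \<sigma> x"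
proof -
  obtain p where p: "p \<in> cyc \<sigma> x" "0 < p" using assms(3) unfolding through_def by auto
  have "p \<in> PM n" using cyc_in_PM[OF assms(1,2) p(1)] .
  then show ?thesis using that p cyc_eq[OF assms(1) finite_PM p(1)] unfolding PM_def by auto
qed

lemma P0_noncross:
  assumes s: "\<sigma> \<in> SNC n" and n: "n \<ge> 1"
    and VW: "V \<in> P0 n \<sigma>" "W \<in> P0 n \<sigma>" "V \<noteq> W"
    and abcd: "a < b" "b < c" "c < d" "a \<in> V" "c \<in> V" "b \<in> W" "d \<in> W"
  shows False
proof -
  have sp: "\<sigma> permutes PM n" using SNC_perm[OF s] .
  have D: "Dn (PM n) (gdg n) \<sigma> = 2 * n" using SNC_Dn[OF s] .
  have part: "is_partition n (P0 n \<sigma>)" using P0_partition[OF s n] .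
  have U: "\<Union>(P0 n \<sigma>) = {1..int n}" using part unfolding is_partition_def by blast
  have r: "a \<in> {1..int n}" "b \<in> {1..int n}" "c \<in> {1..int n}" "d \<in> {1..int n}"
    using U abcd(4-7) VW(1,2) by blast+
  have rng: "0 < a" "d \<le> int n" "a \<in> PM n" "b \<in> PM n" "c \<in> PM n" "d \<in> PM n"
    using r unfolding PM_def by auto
  have ce: "\<And>x y. y \<in> cyc \<sigma> x \<Longrightarrow> cyc \<sigma> y = cyc \<sigma> x" using cyc_eq[OF sp finite_PM] by blast
  have blk: "\<And>U u v. U \<in> P0 n \<sigma> \<Longrightarrow> U \<noteq> V0 n \<sigma> \<Longrightarrow> u \<in> U \<Longrightarrow> v \<in> U \<Longrightarrow>
     cyc \<sigma> u = cyc \<sigma> v \<and> \<not> through (cyc \<sigma> u)"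
  proof -
    fix U u v assume "U \<in> P0 n \<sigma>" "U \<noteq> V0 n \<sigma>" "u \<in> U" "v \<in> U"
    then obtain x where "U = cyc \<sigma> x" "\<not> through (cyc \<sigma> x)" unfolding P0_def by auto
    then show "cyc \<sigma> u = cyc \<sigma> v \<and> \<not> through (cyc \<sigma> u)" using ce \<open>u \<in> U\<close> \<open>v \<in> U\<close> by metis
  qed
  have thr: "\<And>u. u \<in> V0 n \<sigma> \<Longrightarrow> through (cyc \<sigma> u)" unfolding V0_def by auto
  have diff: "\<And>u v. u \<in> V \<Longrightarrow> v \<in> W \<Longrightarrow> cyc \<sigma> u \<noteq> cyc \<sigma> v"
  proof
    fix u v assume uv: "u \<in> V" "v \<in> W" "cyc \<sigma> u = cyc \<sigma> v"
    have "u \<in> cyc \<sigma> v" using uv(3) cyc_self[of u \<sigma>] by simp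
    show False
    proof (cases "V = V0 n \<sigma>")
      case True
      then have "W \<noteq> V0 n \<sigma>" using VW by simp
      then show False using blk[OF VW(2) _ uv(2) uv(2)] thr uv True by metis
    next
      case False
      show False
      proof (cases "W = V0 n \<sigma>")
        case True
        then show False using blk[OF VW(1) False uv(1) uv(1)] thr uv by metis
      next
        case WF: False
        obtain x where x: "V = cyc \<sigma> x" using VW(1) False unfolding P0_def by auto
        obtain y where y: "W = cyc \<sigma> y" using VW(2) WF unfolding P0_def by auto
        have "cyc \<sigma> u = cyc \<sigma> x" "cyc \<sigma> v = cyc \<sigma> y" using uv x y ce by auto
        then show False using uv x y VW(3) by simp
      qed
    qed
  qed
  show False
  proof (cases "V = V0 n \<sigma>")
    case True
    then have WC: "W \<noteq> V0 n \<sigma>" using VW by simp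
    obtain q1 where q1: "q1 < 0" "- int n \<le> q1" "cyc \<sigma> q1 = cyc \<sigma> c"
      using through_neg_elem[OF sp rng(5) thr[of c]] abcd True by blast
    obtain q2 where q2: "q2 < 0" "- int n \<le> q2" "cyc \<sigma> q2 = cyc \<sigma> a"
      using through_neg_elem[OF sp rng(3) thr[of a]] abcd True by blast
    show False
    proof (rule cross_ii[OF n sp D, of b c d a q1 q2])
      show "0 < b" "b < c" "c < d" "d \<le> int n" "0 < a" "a \<le> int n" "a < b \<or> d < a"
        using abcd rng by auto
      show "q1 < 0" "- int n \<le> q1" "q2 < 0" "- int n \<le> q2" using q1 q2 by auto
      show "cyc \<sigma> d = cyc \<sigma> b" using blk[OF VW(2) WC abcd(7) abcd(6)] by simp
      show "cyc \<sigma> q1 = cyc \<sigma> c" "cyc \<sigma> q2 = cyc \<sigma> a" using q1 q2 by auto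
      show "cyc \<sigma> c \<noteq> cyc \<sigma> b" "cyc \<sigma> a \<noteq> cyc \<sigma> b" using diff abcd by metis+
    qed
  next
    case VC: False
    show False
    proof (cases "W = V0 n \<sigma>")
      case True
      obtain q1 where q1: "q1 < 0" "- int n \<le> q1" "cyc \<sigma> q1 = cyc \<sigma> b"
        using through_neg_elem[OF sp rng(4) thr[of b]] abcd True by blast
      obtain q2 where q2: "q2 < 0" "- int n \<le> q2" "cyc \<sigma> q2 = cyc \<sigma> d"
        using through_neg_elem[OF sp rng(6) thr[of d]] abcd True by blast
      show False
      proof (rule cross_ii[OF n sp D, of a b c d q1 q2])
        show "0 < a" "a < b" "b < c" "c \<le> int n" "0 < d" "d \<le> int n" "d < a \<or> c < d"
          using abcd rng by auto
        show "q1 < 0" "- int n \<le> q1" "q2 < 0" "- int n \<le> q2" using q1 q2 by auto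
        show "cyc \<sigma> c = cyc \<sigma> a" using blk[OF VW(1) VC abcd(5) abcd(4)] by simp
        show "cyc \<sigma> q1 = cyc \<sigma> b" "cyc \<sigma> q2 = cyc \<sigma> d" using q1 q2 by auto
        show "cyc \<sigma> b \<noteq> cyc \<sigma> a" "cyc \<sigma> d \<noteq> cyc \<sigma> a" using diff abcd by metis+
      qed
    next
      case WC: False
      obtain t where t: "t \<in> PM n" "through (cyc \<sigma> t)" using exists_through[OF s n] by blast
      obtain p where p: "0 < p" "p \<le> int n" "cyc \<sigma> p = cyc \<sigma> t" using through_pos_elem[OF sp t] by blast
      obtain q where q: "q < 0" "- int n \<le> q" "cyc \<sigma> q = cyc \<sigma> t" using through_neg_elem[OF sp t] by blast
      have nta: "\<not> through (cyc \<sigma> a)" using blk[OF VW(1) VC abcd(4) abcd(4)] by simp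
      have ntb: "\<not> through (cyc \<sigma> b)" using blk[OF VW(2) WC abcd(6) abcd(6)] by simp
      show False
      proof (rule cross_i[OF n sp D, of a b c d p q])
        show "0 < a" "a < b" "b < c" "c \<le> int n" "0 < d" "d \<le> int n" "d < a \<or> c < d"
          using abcd rng by auto
        show "0 < p" "p \<le> int n" "q < 0" "- int n \<le> q" using p q by auto
        show "cyc \<sigma> c = cyc \<sigma> a" using blk[OF VW(1) VC abcd(5) abcd(4)] by simp
        show "cyc \<sigma> d = cyc \<sigma> b" using blk[OF VW(2) WC abcd(7) abcd(6)] by simp
        show "cyc \<sigma> q = cyc \<sigma> p" using p q by simp
        show "cyc \<sigma> b \<noteq> cyc \<sigma> a" using diff abcd by metis
        show "cyc \<sigma> p \<noteq> cyc \<sigma> a" "cyc \<sigma> p \<noteq> cyc \<sigma> b" using p t nta ntb by auto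
      qed
    qed
  qed
qed

lemma P0_NC:
  assumes s: "\<sigma> \<in> SNC n" and n: "n \<ge> 1"
  shows "P0 n \<sigma> \<in> NC n"
  unfolding NC_def using P0_partition[OF s n] P0_noncross[OF s n] by blast


lemma delta_eq: "delta = uminus"
  by (rule ext) (simp add: delta_def)

locale part =
  fixes n :: nat and P :: "int set set"
  assumes P: "is_partition n P"
begin

abbreviation "\<pi> \<equiv> perm_of_partition P"

lemma U: "\<Union>P = {1..int n}" using P unfolding is_partition_def by blast
lemma ne: "W \<in> P \<Longrightarrow> W \<noteq> {}" using P unfolding is_partition_def by blast
lemma disj: "V \<in> P \<Longrightarrow> W \<in> P \<Longrightarrow> V \<noteq> W \<Longrightarrow> V \<inter> W = {}" using P unfolding is_partition_def by blast
lemma sub: "W \<in> P \<Longrightarrow> W \<subseteq> {1..int n}" using U by blast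
lemma fin: "W \<in> P \<Longrightarrow> finite W" using sub finite_subset by blast

lemma blk_eq: "V \<in> P \<Longrightarrow> W \<in> P \<Longrightarrow> w \<in> V \<Longrightarrow> w \<in> W \<Longrightarrow> V = W"
  using disj by blast

lemma the_blk: "W \<in> P \<Longrightarrow> w \<in> W \<Longrightarrow> (THE V. V \<in> P \<and> w \<in> V) = W"
  by (rule the_equality) (simp, metis blk_eq)

lemma pi_in: "W \<in> P \<Longrightarrow> w \<in> W \<Longrightarrow>
  \<pi> w = (if \<exists>y\<in>W. y > w then Min {y\<in>W. y > w} else Min W)"
  unfolding perm_of_partition_def using the_blk by (auto simp: Let_def)

lemma pi_out: "w \<notin> {1..int n} \<Longrightarrow> \<pi> w = w"
  unfolding perm_of_partition_def using U by auto

lemma pi_maps: "W \<in> P \<Longrightarrow> w \<in> W \<Longrightarrow> \<pi> w \<in> W"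
proof -
  assume a: "W \<in> P" "w \<in> W"
  show ?thesis
  proof (cases "\<exists>y\<in>W. y > w")
    case True
    then have "Min {y\<in>W. y > w} \<in> {y\<in>W. y > w}" using fin[OF a(1)] by (intro Min_in) auto
    then show ?thesis using pi_in[OF a] True by auto
  next
    case False
    then show ?thesis using pi_in[OF a] Min_in[OF fin[OF a(1)] ne[OF a(1)]] by auto
  qed
qed

lemma pi_gt: "W \<in> P \<Longrightarrow> w \<in> W \<Longrightarrow> y \<in> W \<Longrightarrow> w < y \<Longrightarrow> w < \<pi> w \<and> \<pi> w \<le> y"
proof -
  assume a: "W \<in> P" "w \<in> W" "y \<in> W" "w < y"
  have f: "finite {y \<in> W. y > w}" using fin[OF a(1)] by simp
  have "\<pi> w = Min {y\<in>W. y > w}" using pi_in[OF a(1,2)] a by auto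
  moreover have "Min {y\<in>W. y > w} \<in> {y\<in>W. y > w}" using f a by (intro Min_in) auto
  moreover have "Min {y\<in>W. y > w} \<le> y" using f a by (intro Min_le) auto
  ultimately show ?thesis by auto
qed

lemma pi_max: "W \<in> P \<Longrightarrow> w \<in> W \<Longrightarrow> \<not> (\<exists>y\<in>W. y > w) \<Longrightarrow> \<pi> w = Min W"
  using pi_in by auto

lemma pi_inj_on: "W \<in> P \<Longrightarrow> inj_on \<pi> W"
proof (rule inj_onI)
  fix x y assume a: "W \<in> P" "x \<in> W" "y \<in> W" "\<pi> x = \<pi> y"
  show "x = y"
  proof (rule ccontr)
    assume "x \<noteq> y"
    then consider "x < y" | "y < x" by linarith
    then show False
    proof cases
      case 1
      have "x < \<pi> x" "\<pi> x \<le> y" using pi_gt[OF a(1,2,3) 1] by auto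
      moreover have "\<pi> y \<in> W" using pi_maps a by auto
      moreover have "Min W \<le> x" using fin[OF a(1)] a by simp
      ultimately have "\<exists>z\<in>W. z > y"
        using a pi_max[OF a(1,3)] by (metis leD le_less_trans)
      then obtain z where "z \<in> W" "z > y" by auto
      then have "y < \<pi> y" using pi_gt[OF a(1,3)] by blast
      then show False using a \<open>\<pi> x \<le> y\<close> by simp
    next
      case 2
      have "y < \<pi> y" "\<pi> y \<le> x" using pi_gt[OF a(1,3,2) 2] by auto
      moreover have "Min W \<le> y" using fin[OF a(1)] a by simp
      ultimately have "\<exists>z\<in>W. z > x"
        using a pi_max[OF a(1,2)] by (metis leD le_less_trans)
      then obtain z where "z \<in> W" "z > x" by auto
      then have "x < \<pi> x" using pi_gt[OF a(1,2)] by blast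
      then show False using a \<open>\<pi> y \<le> x\<close> by simp
    qed
  qed
qed

lemma pi_image: "W \<in> P \<Longrightarrow> \<pi> ` W = W"
  by (rule endo_inj_surj[OF fin _ pi_inj_on]) (auto intro: pi_maps)

lemma blk_of: "x \<in> {1..int n} \<Longrightarrow> \<exists>W\<in>P. x \<in> W" using U by blast

lemma pi_permutes: "\<pi> permutes {1..int n}"
proof (rule inj_imp_permutes)
  show "inj_on \<pi> {1..int n}"
  proof (rule inj_onI)
    fix x y assume a: "x \<in> {1..int n}" "y \<in> {1..int n}" "\<pi> x = \<pi> y"
    obtain V where V: "V \<in> P" "x \<in> V" using blk_of a by blast
    obtain W where W: "W \<in> P" "y \<in> W" using blk_of a by blast
    have "\<pi> x \<in> V" "\<pi> y \<in> W" using pi_maps V W by auto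
    then have "V = W" using blk_eq V W a(3) by auto
    then show "x = y" using pi_inj_on[OF W(1)] V W a(3) by (auto dest: inj_onD)
  qed
  show "\<pi> x \<in> {1..int n}" if "x \<in> {1..int n}" for x
    using blk_of[OF that] pi_maps sub by blast
qed (auto intro: pi_out)

lemma pi_cyc: "W \<in> P \<Longrightarrow> w \<in> W \<Longrightarrow> cyc \<pi> w = W"
proof -
  assume a: "W \<in> P" "w \<in> W"
  let ?O = "cyc \<pi> w"
  have OW: "?O \<subseteq> W" by (rule cyc_closed_sub) (use pi_maps a in auto)
  have fO: "finite ?O" using OW fin[OF a(1)] finite_subset by blast
  have fW: "finite W" using fin[OF a(1)] .
  have maxO: "Max W \<in> ?O"
  proof (rule ccontr)
    assume nm: "Max W \<notin> ?O"
    let ?t = "Max ?O"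
    have One: "?O \<noteq> {}" using cyc_self[of w "\<pi>"] by blast
    have t: "?t \<in> ?O" using Max_in[OF fO One] .
    have "?t < Max W" using t OW fW nm by (metis Max_ge in_mono order_le_imp_less_or_eq)
    then have "?t < \<pi> ?t" using pi_gt[OF a(1) _ Max_in[OF fW ne[OF a(1)]]] t OW by blast
    moreover have "\<pi> ?t \<le> ?t" using cyc_step[OF t] fO by simp
    ultimately show False by simp
  qed
  have minO: "Min W \<in> ?O"
  proof -
    have "\<not> (\<exists>y\<in>W. y > Max W)" using Max_ge[OF fW] by (meson leD)
    then have "\<pi> (Max W) = Min W" using pi_max[OF a(1) Max_in[OF fW ne[OF a(1)]]] by simp
    then show ?thesis using cyc_step[OF maxO] by simp
  qed
  show "?O = W"
  proof (rule ccontr)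
    assume "?O \<noteq> W"
    then have ne2: "W - ?O \<noteq> {}" using OW by blast
    let ?y = "Min (W - ?O)"
    have y: "?y \<in> W" "?y \<notin> ?O" using Min_in[OF _ ne2] fW by auto
    have ymin: "\<And>z. z \<in> W \<Longrightarrow> z < ?y \<Longrightarrow> z \<in> ?O" using fW by (meson DiffI Min_le finite_Diff leD)
    have "Min W < ?y" using y minO fW by (metis Min_le order_le_imp_less_or_eq)
    then have neL: "{z \<in> W. z < ?y} \<noteq> {}" using Min_in[OF fW ne[OF a(1)]] by auto
    let ?y' = "Max {z \<in> W. z < ?y}"
    have y': "?y' \<in> W" "?y' < ?y" using Max_in[OF _ neL] fW by auto
    have y'O: "?y' \<in> ?O" using ymin y' by blast
    have "?y' < \<pi> ?y'" "\<pi> ?y' \<le> ?y" using pi_gt[OF a(1) y'(1) y(1) y'(2)] by auto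
    moreover have "\<pi> ?y' \<in> W" using pi_maps[OF a(1) y'(1)] .
    moreover have "\<not> \<pi> ?y' < ?y"
    proof
      assume "\<pi> ?y' < ?y"
      then have "\<pi> ?y' \<le> ?y'" using \<open>\<pi> ?y' \<in> W\<close> fW by (intro Max_ge) auto
      then show False using \<open>?y' < \<pi> ?y'\<close> by simp
    qed
    ultimately have "\<pi> ?y' = ?y" by simp
    then have "?y \<in> ?O" using cyc_step[OF y'O] by simp
    then show False using y by simp
  qed
qed

definition rho :: "int \<Rightarrow> int" where
  "rho = \<pi> \<circ> delta \<circ> inv \<pi> \<circ> delta"

lemma invpi_pos: "0 < v \<Longrightarrow> 0 < inv \<pi> v"
proof -
  assume v: "0 < v"
  have ip: "inv \<pi> permutes {1..int n}" using permutes_inv[OF pi_permutes] .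
  show ?thesis
  proof (cases "v \<in> {1..int n}")
    case True
    then have "inv \<pi> v \<in> {1..int n}" using permutes_in_image[OF ip] by blast
    then show ?thesis by simp
  next
    case False then show ?thesis using ip v by (simp add: permutes_not_in)
  qed
qed

lemma invpi_nonpos: "v \<le> 0 \<Longrightarrow> inv \<pi> v = v"
  using permutes_inv[OF pi_permutes] by (simp add: permutes_not_in)

lemma rho_pos: "0 < w \<Longrightarrow> rho w = \<pi> w"
  unfolding rho_def delta_eq using invpi_nonpos[of "- w"] by simp

lemma rho_neg: "w < 0 \<Longrightarrow> rho w = - inv \<pi> (- w)"
  unfolding rho_def delta_eq using invpi_pos[of "- w"] pi_out by simp

lemma rho_zero: "rho 0 = 0"
  unfolding rho_def delta_eq using invpi_nonpos[of 0] pi_out by simp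

lemma rho_permutes: "rho permutes PM n"
proof (rule inj_imp_permutes)
  have bd: "bij delta" by (rule o_bij[of delta]) (auto simp: delta_def)
  have "bij rho" unfolding rho_def
    by (intro bij_comp bd permutes_bij[OF pi_permutes] permutes_bij[OF permutes_inv[OF pi_permutes]])
  then show "inj_on rho (PM n)" by (meson bij_is_inj inj_on_subset subset_UNIV)
  show "finite (PM n)" by simp
  fix x
  show "rho x \<in> PM n" if "x \<in> PM n"
  proof (cases "0 < x")
    case True
    then have "x \<in> {1..int n}" using that unfolding PM_def by auto
    then have "\<pi> x \<in> {1..int n}" using permutes_in_image[OF pi_permutes] by blast
    then show ?thesis using rho_pos[OF True] unfolding PM_def by auto
  next
    case False
    then have "x < 0" using that unfolding PM_def by auto
    then have "- x \<in> {1..int n}" using that unfolding PM_def by auto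
    then have "inv \<pi> (- x) \<in> {1..int n}" using permutes_in_image[OF permutes_inv[OF pi_permutes]] by blast
    then show ?thesis using rho_neg[OF \<open>x < 0\<close>] unfolding PM_def by auto
  qed
  show "rho x = x" if "x \<notin> PM n"
  proof -
    have "x = 0 \<or> (0 < x \<and> x > int n) \<or> (x < 0 \<and> - x > int n)" using that unfolding PM_def by auto
    then consider "x = 0" | "0 < x" "x > int n" | "x < 0" "- x > int n" by blast
    then show ?thesis
    proof cases
      case 1 then show ?thesis using rho_zero by simp
    next
      case 2 then show ?thesis using rho_pos pi_out by simp
    next
      case 3
      then have "inv \<pi> (- x) = - x" using permutes_inv[OF pi_permutes] by (simp add: permutes_not_in)
      then show ?thesis using rho_neg 3 by simp
    qed
  qed
qed

lemma rho_cyc_pos: "W \<in> P \<Longrightarrow> w \<in> W \<Longrightarrow> cyc rho w = W"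
proof -
  assume a: "W \<in> P" "w \<in> W"
  have "cyc rho w = cyc \<pi> w"
  proof (rule cyc_agree)
    fix v assume "v \<in> cyc \<pi> w"
    then have "v \<in> W" using pi_cyc a by simp
    then have "0 < v" using sub[OF a(1)] by auto
    then show "rho v = \<pi> v" by (rule rho_pos)
  qed
  then show ?thesis using pi_cyc a by simp
qed

lemma cyc_conj_neg: "cyc (\<lambda>v. - k (- v)) (- w) = uminus ` cyc k w"
proof -
  have "((\<lambda>v. - k (- v)) ^^ j) (- w) = - ((k ^^ j) w)" for j by (induction j) auto
  then show ?thesis unfolding cyc_def by auto
qed

lemma rho_cyc_neg: "W \<in> P \<Longrightarrow> w \<in> W \<Longrightarrow> cyc rho (- w) = uminus ` W"
proof -
  assume a: "W \<in> P" "w \<in> W"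
  have ci: "cyc (inv \<pi>) w = W" using cyc_inv[OF pi_permutes] pi_cyc a by simp
  have "cyc rho (- w) = cyc (\<lambda>v. - inv \<pi> (- v)) (- w)"
  proof (rule cyc_agree)
    fix v assume "v \<in> cyc (\<lambda>v. - inv \<pi> (- v)) (- w)"
    then have "v \<in> uminus ` W" using cyc_conj_neg ci by simp
    then have "v < 0" using sub[OF a(1)] by auto
    then show "rho v = - inv \<pi> (- v)" by (rule rho_neg)
  qed
  then show ?thesis using cyc_conj_neg ci by simp
qed

lemma rho_cyc_nonthrough: "y \<in> PM n \<Longrightarrow> \<not> through (cyc rho y)"
proof -
  assume y: "y \<in> PM n"
  show ?thesis
  proof (cases "0 < y")
    case True
    have "cyc rho y \<subseteq> {v. 0 < v}"
    proof (rule cyc_closed_sub)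
      fix v :: int assume "v \<in> {v. 0 < v}"
      then have "0 < v" by simp
      show "rho v \<in> {v. 0 < v}"
      proof (cases "v \<in> {1..int n}")
        case True
        then have "\<pi> v \<in> {1..int n}" using permutes_in_image[OF pi_permutes] by blast
        then show ?thesis using rho_pos[OF \<open>0 < v\<close>] by simp
      next
        case False
        then show ?thesis using rho_pos[OF \<open>0 < v\<close>] pi_out[OF False] \<open>0 < v\<close> by simp
      qed
    qed (use True in simp)
    then show ?thesis unfolding through_def by auto
  next
    case False
    then have y0: "y < 0" using y unfolding PM_def by auto
    have "cyc rho y \<subseteq> {v. v < 0}"
    proof (rule cyc_closed_sub)
      fix v :: int assume "v \<in> {v. v < 0}"
      then have "v < 0" by simp
      then show "rho v \<in> {v. v < 0}" using rho_neg invpi_pos[of "- v"] by simp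
    qed (use y0 in simp)
    then show ?thesis unfolding through_def by auto
  qed
qed

lemma rho_U_closed:
  assumes V: "V \<in> P" and y: "y \<in> V \<union> uminus ` V"
  shows "cyc rho y \<subseteq> V \<union> uminus ` V"
proof (rule cyc_closed_sub)
  fix v assume v: "v \<in> V \<union> uminus ` V"
  show "rho v \<in> V \<union> uminus ` V"
  proof (cases "v \<in> V")
    case True
    then have "0 < v" using sub[OF V] by auto
    then show ?thesis using rho_pos pi_maps[OF V True] by simp
  next
    case False
    then obtain u where u: "u \<in> V" "v = - u" using v by auto
    then have "0 < u" using sub[OF V] by auto
    obtain u' where u': "u' \<in> V" "u = \<pi> u'" using pi_image[OF V] u by blast
    have "inv \<pi> u = u'" using u' permutes_inverses(2)[OF pi_permutes] by simp
    then show ?thesis using rho_neg[of v] u \<open>0 < u\<close> u' by simp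
  qed
qed (use y in simp)

end


lemma SNC_piV_unf:
  "\<sigma> \<in> SNC_piV n P V \<longleftrightarrow> \<sigma> \<in> SNC n \<and> (\<forall>x\<in>PM n.
     (cyc \<sigma> x \<in> cyc (perm_of_partition P \<circ> delta \<circ> inv (perm_of_partition P) \<circ> delta) ` PM n
        \<or> cyc \<sigma> x \<subseteq> V \<union> uminus ` V)
     \<and> (cyc \<sigma> x \<subseteq> V \<union> uminus ` V \<longrightarrow> through (cyc \<sigma> x)))"
  unfolding SNC_piV_def Let_def delta_eq[symmetric] by simp

lemma exist_piV:
  assumes s: "\<sigma> \<in> SNC n" and n: "n \<ge> 1"
  shows "\<sigma> \<in> SNC_piV n (P0 n \<sigma>) (V0 n \<sigma>)"
proof -
  interpret part n "P0 n \<sigma>" using P0_partition[OF s n] by unfold_locales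
  have sp: "\<sigma> permutes PM n" using SNC_perm[OF s] .
  let ?U = "V0 n \<sigma> \<union> uminus ` V0 n \<sigma>"
  have "(cyc \<sigma> x \<in> cyc rho ` PM n \<or> cyc \<sigma> x \<subseteq> ?U) \<and> (cyc \<sigma> x \<subseteq> ?U \<longrightarrow> through (cyc \<sigma> x))"
    if x: "x \<in> PM n" for x
  proof (cases "through (cyc \<sigma> x)")
    case True
    have "cyc \<sigma> x \<subseteq> ?U"
    proof
      fix y assume y: "y \<in> cyc \<sigma> x"
      have yP: "y \<in> PM n" using cyc_in_PM[OF sp x y] .
      have ty: "through (cyc \<sigma> y)" using cyc_eq[OF sp finite_PM y] True by simp
      have "y \<noteq> 0" using yP unfolding PM_def by auto
      show "y \<in> ?U"
      proof (cases "0 < y")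
        case True then show ?thesis using yP ty unfolding V0_def by auto
      next
        case False
        then have "0 < - y" using \<open>y \<noteq> 0\<close> by simp
        moreover have "through (cyc \<sigma> (- y))" using SNC_cyc_neg[OF s yP] ty by simp
        moreover have "- y \<in> PM n" using yP by simp
        ultimately have "- y \<in> V0 n \<sigma>" unfolding V0_def by blast
        then have "- (- y) \<in> uminus ` V0 n \<sigma>" by blast
        then show ?thesis by simp
      qed
    qed
    then show ?thesis using True by simp
  next
    case False
    have x0: "x \<noteq> 0" using x unfolding PM_def by auto
    show ?thesis
    proof (cases "0 < x")
      case True
      have W: "cyc \<sigma> x \<in> P0 n \<sigma>" using x True False unfolding P0_def by auto
      have "cyc rho x = cyc \<sigma> x" using rho_cyc_pos[OF W] by simp
      then have A: "cyc \<sigma> x \<in> cyc rho ` PM n" using x by (metis image_eqI)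
      have "x \<notin> ?U" using False True unfolding V0_def by auto
      then show ?thesis using A cyc_self[of x \<sigma>] by blast
    next
      case xneg: False
      have xn: "- x \<in> PM n" "0 < - x" using x x0 xneg by auto
      have cn: "cyc \<sigma> (- x) = uminus ` cyc \<sigma> x" using SNC_cyc_neg[OF s x] .
      have nt: "\<not> through (cyc \<sigma> (- x))" using cn False by simp
      have W: "cyc \<sigma> (- x) \<in> P0 n \<sigma>" using xn nt unfolding P0_def by auto
      have "cyc rho (- (- x)) = uminus ` cyc \<sigma> (- x)" using rho_cyc_neg[OF W cyc_self[of "- x" \<sigma>]] .
      then have "cyc rho x = cyc \<sigma> x" using cn by (simp add: image_image)
      then have A: "cyc \<sigma> x \<in> cyc rho ` PM n" using x by (metis image_eqI)
      have "x \<notin> ?U"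
      proof
        assume "x \<in> ?U"
        then have "- x \<in> V0 n \<sigma>" using xneg unfolding V0_def by auto
        then show False using nt unfolding V0_def by auto
      qed
      then show ?thesis using A cyc_self[of x \<sigma>] by blast
    qed
  qed
  then show ?thesis unfolding SNC_piV_unf rho_def[symmetric] using s by blast
qed

lemma determ:
  assumes pv: "\<sigma> \<in> SNC_piV n P V" and P: "P \<in> NC n" and V: "V \<in> P" and n: "n \<ge> 1"
  shows "V = V0 n \<sigma> \<and> P = P0 n \<sigma>"
proof -
  have Pp: "is_partition n P" using P unfolding NC_def by auto
  interpret part n P using Pp by unfold_locales
  have s: "\<sigma> \<in> SNC n" using pv unfolding SNC_piV_unf by blast
  have sp: "\<sigma> permutes PM n" using SNC_perm[OF s] .
  let ?U = "V \<union> uminus ` V"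
  have C: "\<And>x. x \<in> PM n \<Longrightarrow> (cyc \<sigma> x \<in> cyc rho ` PM n \<or> cyc \<sigma> x \<subseteq> ?U) \<and> (cyc \<sigma> x \<subseteq> ?U \<longrightarrow> through (cyc \<sigma> x))"
    using pv unfolding SNC_piV_unf rho_def[symmetric] by blast
  have rp: "rho permutes PM n" by (rule rho_permutes)
  have Vpos: "\<And>v. v \<in> V \<Longrightarrow> 0 < v \<and> v \<in> PM n" using sub[OF V] unfolding PM_def by auto
  have VV0: "V = V0 n \<sigma>"
  proof
    show "V \<subseteq> V0 n \<sigma>"
    proof
      fix x assume xV: "x \<in> V"
      have xP: "x \<in> PM n" "0 < x" using Vpos[OF xV] by auto
      have "through (cyc \<sigma> x)"
      proof (cases "cyc \<sigma> x \<subseteq> ?U")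
        case True then show ?thesis using C[OF xP(1)] by blast
      next
        case False
        then obtain y where y: "y \<in> PM n" "cyc \<sigma> x = cyc rho y" using C[OF xP(1)] by blast
        have "x \<in> cyc rho y" using y(2) cyc_self[of x \<sigma>] by simp
        then have "cyc rho x = cyc rho y" using cyc_eq[OF rp finite_PM] by blast
        moreover have "cyc rho x \<subseteq> ?U" using rho_U_closed[OF V] xV by blast
        ultimately show ?thesis using False y by simp
      qed
      then show "x \<in> V0 n \<sigma>" using xP unfolding V0_def by auto
    qed
  next
    show "V0 n \<sigma> \<subseteq> V"
    proof
      fix x assume "x \<in> V0 n \<sigma>"
      then have x: "x \<in> PM n" "0 < x" "through (cyc \<sigma> x)" unfolding V0_def by auto
      have "\<not> (cyc \<sigma> x \<in> cyc rho ` PM n)" using rho_cyc_nonthrough x(3) by auto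
      then have "cyc \<sigma> x \<subseteq> ?U" using C[OF x(1)] by blast
      then have "x \<in> ?U" using cyc_self[of x \<sigma>] by blast
      then consider "x \<in> V" | v where "v \<in> V" "x = - v" by blast
      then show "x \<in> V"
      proof cases
        case 2 then show ?thesis using Vpos[OF 2(1)] x(2) by simp
      qed simp
    qed
  qed
  have key: "\<And>W w. W \<in> P \<Longrightarrow> W \<noteq> V \<Longrightarrow> w \<in> W \<Longrightarrow> cyc \<sigma> w = W \<and> \<not> through (cyc \<sigma> w)"
  proof -
    fix W w assume a: "W \<in> P" "W \<noteq> V" "w \<in> W"
    have wV: "w \<notin> V" using disj[OF a(1) V a(2)] a(3) by auto
    have w: "0 < w" "w \<in> PM n" using sub[OF a(1)] a(3) unfolding PM_def by auto
    have "\<not> cyc \<sigma> w \<subseteq> ?U"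
    proof
      assume "cyc \<sigma> w \<subseteq> ?U"
      then have "w \<in> ?U" using cyc_self[of w \<sigma>] by blast
      then consider "w \<in> V" | v where "v \<in> V" "w = - v" by blast
      then show False
      proof cases
        case 2 then show ?thesis using Vpos[OF 2(1)] w(1) by simp
      qed (use wV in simp)
    qed
    then obtain y where y: "y \<in> PM n" "cyc \<sigma> w = cyc rho y" using C[OF w(2)] by blast
    have "w \<in> cyc rho y" using y(2) cyc_self[of w \<sigma>] by simp
    then have "cyc rho w = cyc rho y" using cyc_eq[OF rp finite_PM] by blast
    then show "cyc \<sigma> w = W \<and> \<not> through (cyc \<sigma> w)"
      using rho_cyc_pos[OF a(1,3)] y rho_cyc_nonthrough[OF y(1)] by simp
  qed
  have "P = P0 n \<sigma>"
  proof
    show "P \<subseteq> P0 n \<sigma>"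
    proof
      fix W assume W: "W \<in> P"
      show "W \<in> P0 n \<sigma>"
      proof (cases "W = V")
        case True then show ?thesis using VV0 unfolding P0_def by simp
      next
        case False
        obtain w where w: "w \<in> W" using ne[OF W] by blast
        have wp: "0 < w" "w \<in> PM n" using sub[OF W] w unfolding PM_def by auto
        show ?thesis using key[OF W False w] wp unfolding P0_def by blast
      qed
    qed
  next
    show "P0 n \<sigma> \<subseteq> P"
    proof
      fix W assume "W \<in> P0 n \<sigma>"
      then consider "W = V0 n \<sigma>" | x where "W = cyc \<sigma> x" "x \<in> PM n" "0 < x" "\<not> through (cyc \<sigma> x)"
        unfolding P0_def by auto
      then show "W \<in> P"
      proof cases
        case 1 then show ?thesis using V VV0 by simp
      next
        case 2
        then have "x \<in> {1..int n}" unfolding PM_def by auto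
        then obtain W' where W': "W' \<in> P" "x \<in> W'" using blk_of by blast
        have "W' \<noteq> V" using W' VV0 2 unfolding V0_def by auto
        then have "cyc \<sigma> x = W'" using key[OF W'(1) _ W'(2)] by blast
        then show ?thesis using 2 W' by simp
      qed
    qed
  qed
  then show ?thesis using VV0 by simp
qed

theorem lemma6p8:
  fixes n :: nat
  assumes "n \<ge> 2"
  shows "SNC n = (\<Union>P\<in>NC n. \<Union>V\<in>P. SNC_piV n P V)
     \<and> (\<forall>P\<in>NC n. \<forall>V\<in>P. \<forall>P'\<in>NC n. \<forall>V'\<in>P'.
           (P, V) \<noteq> (P', V') \<longrightarrow> SNC_piV n P V \<inter> SNC_piV n P' V' = {})"
proof
  have n: "n \<ge> 1" using assms by simp
  show "SNC n = (\<Union>P\<in>NC n. \<Union>V\<in>P. SNC_piV n P V)"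
  proof
    show "SNC n \<subseteq> (\<Union>P\<in>NC n. \<Union>V\<in>P. SNC_piV n P V)"
    proof
      fix \<sigma> assume s: "\<sigma> \<in> SNC n"
      have "P0 n \<sigma> \<in> NC n" "V0 n \<sigma> \<in> P0 n \<sigma>" using P0_NC[OF s n] unfolding P0_def by auto
      then show "\<sigma> \<in> (\<Union>P\<in>NC n. \<Union>V\<in>P. SNC_piV n P V)" using exist_piV[OF s n] by blast
    qed
    show "(\<Union>P\<in>NC n. \<Union>V\<in>P. SNC_piV n P V) \<subseteq> SNC n"
      unfolding SNC_piV_def by auto
  qed
  show "\<forall>P\<in>NC n. \<forall>V\<in>P. \<forall>P'\<in>NC n. \<forall>V'\<in>P'.
           (P, V) \<noteq> (P', V') \<longrightarrow> SNC_piV n P V \<inter> SNC_piV n P' V' = {}"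
  proof (intro ballI impI)
    fix P V P' V' assume a: "P \<in> NC n" "V \<in> P" "P' \<in> NC n" "V' \<in> P'" "(P, V) \<noteq> (P', V')"
    show "SNC_piV n P V \<inter> SNC_piV n P' V' = {}"
    proof (rule ccontr)
      assume "SNC_piV n P V \<inter> SNC_piV n P' V' \<noteq> {}"
      then obtain \<sigma> where "\<sigma> \<in> SNC_piV n P V" "\<sigma> \<in> SNC_piV n P' V'" by blast
      then have "V = V0 n \<sigma> \<and> P = P0 n \<sigma>" "V' = V0 n \<sigma> \<and> P' = P0 n \<sigma>"
        using determ a n by blast+
      then show False using a(5) by simp
    qed
  qed
qed


end
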